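(* Let $P,A_I,A_O,B_I,B_O,F$ be finite-dimensional Hilbert spaces with $\dim A_I=\dim A_O=\dim B_I=\dim B_O=d$ and $\dim P=\dim F=D$, and let $U:P\otimes A_O\otimes B_O\to A_I\otimes B_I\otimes F$ be a unitary operator representing a direct sum of pure combs with two slots $A$ and $B$. (1) If $D=d$, then $U$ is causally ordered, and either $U=U_0^{P\to A_I}\otimes U_1^{A_O\to B_I}\otimes U_2^{B_O\to F}$ for some unitaries $U_0:P\to A_I$, $U_1:A_O\to B_I$, $U_2:B_O\to F$, or $U=V_0^{P\to B_I}\otimes V_1^{B_O\to A_I}\otimes V_2^{A_O\to F}$ for some unitaries $V_0:P\to B_I$, $V_1:B_O\to A_I$, $V_2:A_O\to F$. (2) If $D=2d$, then either $U$ is causally ordered, or there are tensor decompositions $P=P_c\otimes P_t$, $F=F_c\otimes F_t$ with $\dim P_c=\dim F_c=2$, $\dim P_t=\dim F_t=d$, orthonormal bases $\{|0\rangle,|1\rangle\}$ of $P_c$ and of $F_c$, and unitaries $U_0:P_t\to A_I$, $U_1:A_O\to B_I$, $U_2:B_O\to F_t$, $V_0:P_t\to B_I$, $V_1:B_O\to A_I$, $V_2:A_O\to F_t$ such that $$U=|0\rangle^{F_c}\langle0|^{P_c}\otimes U_0^{P_t\to A_I}\otimes U_1^{A_O\to B_I}\otimes U_2^{B_O\to F_t}+|1\rangle^{F_c}\langle1|^{P_c}\otimes V_0^{P_t\to B_I}\otimes V_1^{B_O\to A_I}\otimes V_2^{A_O\to F_t}.$$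
   Context: Choi vector of $X:\mathcal{H}_I\to\mathcal{H}_O$: $|X\rangle\rangle=\sum_i|i\rangle\otimes X|i\rangle$. A unitary $V:P'\otimes A_O\otimes B_O\to A_I\otimes B_I\otimes F'$ represents the two-slot supermap (slots $A$: $A_I\to A_O$, $B$: $B_I\to B_O$, global past $P'$, global future $F'$) with Choi operator $|V\rangle\rangle\langle\langle V|$. It represents a quantum comb of $A\prec B$ if this Choi operator $W\ge0$ satisfies $\mathrm{Tr}_{F'}W=1^{B_O}\otimes R_2$, $\mathrm{Tr}_{B_I}R_2=1^{A_O}\otimes R_1$, $\mathrm{Tr}_{A_I}R_1=1^{P'}$ for some $R_2,R_1$ (realizable by a circuit using $A$ before $B$); comb of $B\prec A$ with $A,B$ exchanged. "$U$ is causally ordered" means $U$ represents a quantum comb of $A\prec B$ or of $B\prec A$. $U$ represents a direct sum of pure combs if there are orthogonal decompositions $P=P^{A\prec B}\oplus P^{B\prec A}$, $F=F^{A\prec B}\oplus F^{B\prec A}$ and unitaries $U^{A\prec B}:P^{A\prec B}\otimes A_O\otimes B_O\to A_I\otimes B_I\otimes F^{A\prec B}$ representing a comb of $A\prec B$ and $U^{B\prec A}:P^{B\prec A}\otimes A_O\otimes B_O\to A_I\otimes B_I\otimes F^{B\prec A}$ representing a comb of $B\prec A$, with $U=U^{A\prec B}\oplus U^{B\prec A}$. In tensor products of operators with superscripts $X\to Y$, each factor maps the indicated input space to the indicated output space, and the factors are arranged so that the product maps $P\otimes A_O\otimes B_O$ to $A_I\otimes B_I\otimes F$. *)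

theory Defs
  imports "Jordan_Normal_Form.Matrix" "HOL.Complex"
begin

(* Finite-dimensional Hilbert spaces are C^n with the standard (orthonormal) basis;
   operators X : C^m -> C^n are complex n x m matrices (Jordan_Normal_Form).
   Tensor products use the lexicographic index convention:
   C^n1 (x) C^n2 (x) C^n3 has basis index (i1*n2 + i2)*n3 + i3. *)

definition tidx3 :: "nat \<Rightarrow> nat \<Rightarrow> nat \<Rightarrow> nat \<Rightarrow> nat \<Rightarrow> nat" where
  "tidx3 n2 n3 i1 i2 i3 = (i1 * n2 + i2) * n3 + i3"

definition tidx2 :: "nat \<Rightarrow> nat \<Rightarrow> nat \<Rightarrow> nat" where
  "tidx2 n2 i1 i2 = i1 * n2 + i2"

definition adj :: "complex mat \<Rightarrow> complex mat" where
  "adj A = mat (dim_col A) (dim_row A) (\<lambda>(i,j). cnj (A $$ (j,i)))"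

definition unitary_mat :: "nat \<Rightarrow> complex mat \<Rightarrow> bool" where
  "unitary_mat n A \<longleftrightarrow> A \<in> carrier_mat n n \<and> A * adj A = 1\<^sub>m n \<and> adj A * A = 1\<^sub>m n"

definition isometry_mat :: "nat \<Rightarrow> nat \<Rightarrow> complex mat \<Rightarrow> bool" where
  "isometry_mat n m J \<longleftrightarrow> J \<in> carrier_mat n m \<and> adj J * J = 1\<^sub>m m"

definition kron :: "complex mat \<Rightarrow> complex mat \<Rightarrow> complex mat" where
  "kron A B = mat (dim_row A * dim_row B) (dim_col A * dim_col B)
     (\<lambda>(i,j). A $$ (i div dim_row B, j div dim_col B) * B $$ (i mod dim_row B, j mod dim_col B))"

(* Matrix entry of V : P (x) A_O (x) B_O -> A_I (x) B_I (x) F, i.e.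
   <ai,bi,f| V |p,ao,bo>;  dims: aI bI f (output), aO bO (input, besides P). *)
definition opent :: "nat \<Rightarrow> nat \<Rightarrow> nat \<Rightarrow> nat \<Rightarrow> nat \<Rightarrow> complex mat
    \<Rightarrow> nat \<Rightarrow> nat \<Rightarrow> nat \<Rightarrow> nat \<Rightarrow> nat \<Rightarrow> nat \<Rightarrow> complex" where
  "opent aI bI f aO bO V ai bi fi p ao bo = V $$ (tidx3 bI f ai bi fi, tidx3 aO bO p ao bo)"

(* Choi operator W = |V>><<V| on P (x) A_O (x) B_O (x) A_I (x) B_I (x) F, where
   |V>> = sum_i |i> (x) V|i>.  Entries indexed by tuples (p,ao,bo,ai,bi,f). *)
type_synonym idx6 = "nat \<times> nat \<times> nat \<times> nat \<times> nat \<times> nat"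

definition choi :: "nat \<Rightarrow> nat \<Rightarrow> nat \<Rightarrow> nat \<Rightarrow> nat \<Rightarrow> complex mat \<Rightarrow> idx6 \<Rightarrow> idx6 \<Rightarrow> complex" where
  "choi aI aO bI bO f V x y =
     (case x of (p,ao,bo,ai,bi,fi) \<Rightarrow> case y of (p',ao',bo',ai',bi',fi') \<Rightarrow>
        opent aI bI f aO bO V ai bi fi p ao bo * cnj (opent aI bI f aO bO V ai' bi' fi' p' ao' bo'))"

definition kd :: "nat \<Rightarrow> nat \<Rightarrow> complex" where
  "kd i j = (if i = j then 1 else 0)"

(* V (with Hilbert spaces P,A_I,A_O,B_I,B_O,F of dims p,aI,aO,bI,bO,f) represents a
   quantum comb of A \<prec> B: Tr_F W = 1^{B_O} (x) R2, Tr_{B_I} R2 = 1^{A_O} (x) R1,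
   Tr_{A_I} R1 = 1^P, written out entrywise in the standard bases.
   R2 is an operator on P (x) A_O (x) A_I (x) B_I, R1 on P (x) A_I.
   (W \<ge> 0 holds automatically since W is rank one.) *)
definition comb_AB :: "nat \<Rightarrow> nat \<Rightarrow> nat \<Rightarrow> nat \<Rightarrow> nat \<Rightarrow> nat \<Rightarrow> complex mat \<Rightarrow> bool" where
  "comb_AB p aI aO bI bO f V \<longleftrightarrow>
   (\<exists>R2 :: (nat \<times> nat \<times> nat \<times> nat) \<Rightarrow> (nat \<times> nat \<times> nat \<times> nat) \<Rightarrow> complex.
    \<exists>R1 :: (nat \<times> nat) \<Rightarrow> (nat \<times> nat) \<Rightarrow> complex.
     (\<forall>q<p. \<forall>ao<aO. \<forall>bo<bO. \<forall>ai<aI. \<forall>bi<bI.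
      \<forall>q'<p. \<forall>ao'<aO. \<forall>bo'<bO. \<forall>ai'<aI. \<forall>bi'<bI.
        (\<Sum>fi<f. choi aI aO bI bO f V (q,ao,bo,ai,bi,fi) (q',ao',bo',ai',bi',fi))
          = kd bo bo' * R2 (q,ao,ai,bi) (q',ao',ai',bi')) \<and>
     (\<forall>q<p. \<forall>ao<aO. \<forall>ai<aI. \<forall>q'<p. \<forall>ao'<aO. \<forall>ai'<aI.
        (\<Sum>bi<bI. R2 (q,ao,ai,bi) (q',ao',ai',bi)) = kd ao ao' * R1 (q,ai) (q',ai')) \<and>
     (\<forall>q<p. \<forall>q'<p. (\<Sum>ai<aI. R1 (q,ai) (q',ai)) = kd q q'))"

(* comb of B \<prec> A: the same with A and B exchanged. R2 on P (x) B_O (x) A_I (x) B_I,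
   R1 on P (x) B_I. *)
definition comb_BA :: "nat \<Rightarrow> nat \<Rightarrow> nat \<Rightarrow> nat \<Rightarrow> nat \<Rightarrow> nat \<Rightarrow> complex mat \<Rightarrow> bool" where
  "comb_BA p aI aO bI bO f V \<longleftrightarrow>
   (\<exists>R2 :: (nat \<times> nat \<times> nat \<times> nat) \<Rightarrow> (nat \<times> nat \<times> nat \<times> nat) \<Rightarrow> complex.
    \<exists>R1 :: (nat \<times> nat) \<Rightarrow> (nat \<times> nat) \<Rightarrow> complex.
     (\<forall>q<p. \<forall>ao<aO. \<forall>bo<bO. \<forall>ai<aI. \<forall>bi<bI.
      \<forall>q'<p. \<forall>ao'<aO. \<forall>bo'<bO. \<forall>ai'<aI. \<forall>bi'<bI.
        (\<Sum>fi<f. choi aI aO bI bO f V (q,ao,bo,ai,bi,fi) (q',ao',bo',ai',bi',fi))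
          = kd ao ao' * R2 (q,bo,ai,bi) (q',bo',ai',bi')) \<and>
     (\<forall>q<p. \<forall>bo<bO. \<forall>bi<bI. \<forall>q'<p. \<forall>bo'<bO. \<forall>bi'<bI.
        (\<Sum>ai<aI. R2 (q,bo,ai,bi) (q',bo',ai,bi')) = kd bo bo' * R1 (q,bi) (q',bi')) \<and>
     (\<forall>q<p. \<forall>q'<p. (\<Sum>bi<bI. R1 (q,bi) (q',bi)) = kd q q'))"

definition causally_ordered :: "nat \<Rightarrow> nat \<Rightarrow> nat \<Rightarrow> nat \<Rightarrow> nat \<Rightarrow> nat \<Rightarrow> complex mat \<Rightarrow> bool" where
  "causally_ordered p aI aO bI bO f V \<longleftrightarrow>
     comb_AB p aI aO bI bO f V \<or> comb_BA p aI aO bI bO f V"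

(* The orthogonal decompositions P = P1 \<oplus> P2, F = F1 \<oplus> F2 are given by
   orthonormal bases, i.e. isometries J1 : C^p1 -> P, J2 : C^p2 -> P with orthogonal ranges
   and p1 + p2 = D (similarly K1, K2 for F). U = U1 \<oplus> U2 means
   U (J_k (x) 1 (x) 1) = (1 (x) 1 (x) K_k) U_k for k = 1,2. *)
definition direct_sum_pure_combs :: "nat \<Rightarrow> nat \<Rightarrow> complex mat \<Rightarrow> bool" where
  "direct_sum_pure_combs d D U \<longleftrightarrow>
   (\<exists>p1 p2 f1 f2 J1 J2 K1 K2 U1 U2.
      p1 + p2 = D \<and> f1 + f2 = D \<and>
      isometry_mat D p1 J1 \<and> isometry_mat D p2 J2 \<and> adj J1 * J2 = 0\<^sub>m p1 p2 \<and>
      isometry_mat D f1 K1 \<and> isometry_mat D f2 K2 \<and> adj K1 * K2 = 0\<^sub>m f1 f2 \<and>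
      U1 \<in> carrier_mat (d*d*f1) (p1*d*d) \<and> unitary_mat (p1*d*d) U1 \<and>
      U2 \<in> carrier_mat (d*d*f2) (p2*d*d) \<and> unitary_mat (p2*d*d) U2 \<and>
      comb_AB p1 d d d d f1 U1 \<and> comb_BA p2 d d d d f2 U2 \<and>
      U * kron (kron J1 (1\<^sub>m d)) (1\<^sub>m d) = kron (kron (1\<^sub>m d) (1\<^sub>m d)) K1 * U1 \<and>
      U * kron (kron J2 (1\<^sub>m d)) (1\<^sub>m d) = kron (kron (1\<^sub>m d) (1\<^sub>m d)) K2 * U2)"

end

theory Submission
  imports Defs "Jordan_Normal_Form.Determinant"
begin

lemma kd_simps[simp]: "kd i i = 1" "i \<noteq> j \<Longrightarrow> kd i j = 0"
  by (auto simp: kd_def)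

lemma kd_sym: "kd i j = kd j i" by (auto simp: kd_def)
lemma cnj_kd[simp]: "cnj (kd i j) = kd i j" by (auto simp: kd_def)

lemma sum_kd_right[simp]: "b < n \<Longrightarrow> (\<Sum>a<n. g a * kd a b) = g b"
  by (simp add: kd_def if_distrib[of "\<lambda>x. _ * x"] sum.delta' cong: if_cong)
lemma sum_kd_left[simp]: "b < n \<Longrightarrow> (\<Sum>a<n. kd a b * g a) = g b"
  using sum_kd_right[of b n g] by (simp add: mult.commute)
lemma sum_kd_right'[simp]: "b < n \<Longrightarrow> (\<Sum>a<n. g a * kd b a) = g b"
  by (subst kd_sym) simp
lemma sum_kd_left'[simp]: "b < n \<Longrightarrow> (\<Sum>a<n. kd b a * g a) = g b"
  by (subst kd_sym) simp

lemma mult_cnj_self: "z * cnj z = of_real ((cmod z)^2)"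
  by (rule complex_norm_square[symmetric])

lemma sum_lessThan_add: "(\<Sum>k<(m::nat)+n. f k) = (\<Sum>k<m. f k) + (\<Sum>k<n. f (m+k))"
  by (induction n) (auto simp: add.assoc)

lemma sum_prod_idx: "(\<Sum>i<(a::nat)*b. g i) = (\<Sum>i<a. \<Sum>j<b. g (i*b+j))"
proof (induction a)
  case 0 then show ?case by simp
next
  case (Suc a)
  have "(\<Sum>i<Suc a*b. g i) = (\<Sum>i<a*b + b. g i)" by (simp add: add.commute)
  also have "\<dots> = (\<Sum>i<a*b. g i) + (\<Sum>j<b. g (a*b+j))" by (rule sum_lessThan_add)
  finally show ?case using Suc by simp
qed

lemma sum3_idx: "(\<Sum>i<(n1::nat)*n2*n3. g i) = (\<Sum>i1<n1. \<Sum>i2<n2. \<Sum>i3<n3. g (tidx3 n2 n3 i1 i2 i3))"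
  by (simp add: sum_prod_idx tidx3_def)

lemma tidx3_bound: "i1 < n1 \<Longrightarrow> i2 < n2 \<Longrightarrow> i3 < n3 \<Longrightarrow> tidx3 n2 n3 i1 i2 i3 < n1*n2*n3"
proof -
  assume a: "i1 < n1" "i2 < n2" "i3 < n3"
  have "i1*n2+i2 < n1*n2"
  proof -
    have "i1*n2+i2 < (i1+1)*n2" using a by simp
    also have "\<dots> \<le> n1*n2" using a by (intro mult_right_mono) auto
    finally show ?thesis .
  qed
  hence "i1*n2+i2+1 \<le> n1*n2" by simp
  have "(i1*n2+i2)*n3+i3 < (i1*n2+i2+1)*n3" using a by simp
  also have "\<dots> \<le> n1*n2*n3" using \<open>i1*n2+i2+1 \<le> n1*n2\<close> by (intro mult_right_mono) auto
  finally show ?thesis by (simp add: tidx3_def)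
qed

lemma tidx2_div_mod: "(j::nat) < n \<Longrightarrow> (i*n+j) div n = i \<and> (i*n+j) mod n = j"
  by (induction i) (auto simp: add.assoc)

lemma tidx3_eq: "i2 < n2 \<Longrightarrow> i3 < n3 \<Longrightarrow> j2 < n2 \<Longrightarrow> j3 < n3 \<Longrightarrow>
   (tidx3 n2 n3 i1 i2 i3 = tidx3 n2 n3 j1 j2 j3) = (i1 = j1 \<and> i2 = j2 \<and> i3 = j3)"
  unfolding tidx3_def
  by (metis tidx2_div_mod)

lemma bessel:
  fixes v :: "nat \<Rightarrow> nat \<Rightarrow> complex"
  assumes orth: "\<And>i i'. i<n \<Longrightarrow> i'<n \<Longrightarrow> (\<Sum>j<m. v i j * cnj (v i' j)) = kd i i'"
  shows "n \<le> m"
proof -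
  define Q where "Q j j' = (\<Sum>i<n. v i j * cnj (v i j'))" for j j'
  define q where "q j = (\<Sum>i<n. (cmod (v i j))^2)" for j
  have Qjj: "Q j j = of_real (q j)" for j
    by (simp add: Q_def q_def mult_cnj_self)
  have key: "(\<Sum>j'<m. Q j j' * cnj (Q j j')) = Q j j" for j
  proof -
    have "Q j j' * cnj (Q j j') = (\<Sum>i<n. \<Sum>i'<n. v i j * cnj (v i' j) * (v i' j' * cnj (v i j')))" for j'
      unfolding Q_def cnj_sum complex_cnj_mult complex_cnj_cnj sum_product
      by (intro sum.cong refl) (simp add: mult_ac)
    hence "(\<Sum>j'<m. Q j j' * cnj (Q j j')) =
        (\<Sum>j'<m. \<Sum>i<n. \<Sum>i'<n. v i j * cnj (v i' j) * (v i' j' * cnj (v i j')))"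
      by simp
    also have "\<dots> = (\<Sum>i<n. \<Sum>i'<n. v i j * cnj (v i' j) * (\<Sum>j'<m. v i' j' * cnj (v i j')))"
      by (simp only: sum_distrib_left sum.swap[of _ "{..<m}"])
    also have "\<dots> = (\<Sum>i<n. \<Sum>i'<n. v i j * cnj (v i' j) * kd i' i)"
      by (simp add: orth)
    also have "\<dots> = Q j j" by (simp add: Q_def)
    finally show ?thesis .
  qed
  have q_nonneg: "q j \<ge> 0" for j unfolding q_def by (intro sum_nonneg) simp
  have q_le: "q j \<le> 1" if "j < m" for j
  proof -
    have "of_real (\<Sum>j'<m. (cmod (Q j j'))^2) = (of_real (q j) :: complex)"
      using key[of j] unfolding mult_cnj_self Qjj of_real_sum .
    hence s: "(\<Sum>j'<m. (cmod (Q j j'))^2) = q j" by (simp only: of_real_eq_iff)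
    have "(cmod (Q j j))^2 \<le> (\<Sum>j'<m. (cmod (Q j j'))^2)"
      using that by (intro member_le_sum) auto
    moreover have "cmod (Q j j) = q j" unfolding Qjj using q_nonneg[of j] by simp
    ultimately have le: "(q j)^2 \<le> q j" using s by simp
    show ?thesis
    proof (rule ccontr)
      assume "\<not> q j \<le> 1"
      hence "q j * 1 < q j * q j" by (intro mult_strict_left_mono) auto
      thus False using le by (simp add: power2_eq_square)
    qed
  qed
  have "(\<Sum>j<m. q j) = (\<Sum>i<n. \<Sum>j<m. (cmod (v i j))^2)"
    unfolding q_def by (rule sum.swap)
  also have "\<dots> = (\<Sum>i<n. 1)"
  proof (rule sum.cong)
    fix i assume "i \<in> {..<n}"
    hence "(\<Sum>j<m. v i j * cnj (v i j)) = 1" using orth[of i i] by simp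
    hence "of_real (\<Sum>j<m. (cmod (v i j))^2) = (of_real 1::complex)" unfolding mult_cnj_self of_real_sum by simp
    thus "(\<Sum>j<m. (cmod (v i j))^2) = 1" by (simp only: of_real_eq_iff)
  qed simp
  finally have "(\<Sum>j<m. q j) = real n" by simp
  moreover have "(\<Sum>j<m. q j) \<le> (\<Sum>j<m. (1::real))" by (intro sum_mono q_le) simp
  ultimately show ?thesis by simp
qed

lemma sum_cmod_sq_zero:
  fixes g :: "nat \<Rightarrow> complex"
  assumes "(\<Sum>j<m. g j * cnj (g j)) = 0" "j < m"
  shows "g j = 0"
proof -
  have "of_real (\<Sum>j<m. (cmod (g j))^2) = (of_real 0 :: complex)"
    using assms(1) unfolding mult_cnj_self of_real_sum by simp
  hence "(\<Sum>j<m. (cmod (g j))^2) = 0" by (simp only: of_real_eq_iff)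
  hence "\<forall>j\<in>{..<m}. (cmod (g j))^2 = 0" by (subst sum_nonneg_eq_0_iff[symmetric]) auto
  thus ?thesis using assms(2) by simp
qed

lemma sum_self_real:
  fixes g :: "nat \<Rightarrow> complex"
  shows "(\<Sum>j<m. g j * cnj (g j)) = of_real (\<Sum>j<m. (cmod (g j))^2)"
  unfolding mult_cnj_self of_real_sum ..

lemma rank_one:
  fixes G :: "nat \<Rightarrow> 'r \<Rightarrow> nat \<Rightarrow> complex" and R :: "'r \<Rightarrow> 'r \<Rightarrow> complex"
    and Rw :: "'r set" and c :: real
  assumes fin: "finite Rw"
  and H1: "\<And>b b' r r'. b<k \<Longrightarrow> b'<k \<Longrightarrow> r\<in>Rw \<Longrightarrow> r'\<in>Rw \<Longrightarrow>
            (\<Sum>j<m. G b r j * cnj (G b' r' j)) = kd b b' * R r r'"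
  and H2: "\<And>j j'. j<m \<Longrightarrow> j'<m \<Longrightarrow>
            (\<Sum>b<k. \<Sum>r\<in>Rw. cnj (G b r j) * G b r j') = of_real c * kd j j'"
  and c: "c > 0" and m0: "0 < m" and mk: "m < 2*k"
  shows "m = k \<and> (\<exists>w u. (\<forall>b<k. \<forall>r\<in>Rw. \<forall>j<m. G b r j = w r * u b j) \<and>
            (\<forall>b<k. \<forall>b'<k. (\<Sum>j<m. u b j * cnj (u b' j)) = kd b b') \<and>
            (\<forall>j<m. \<forall>j'<m. (\<Sum>b<k. cnj (u b j) * u b j') = kd j j'))"
proof -
  have k0: "0 < k" using m0 mk by simp
  have "\<exists>r0\<in>Rw. R r0 r0 \<noteq> 0"
  proof (rule ccontr)
    assume "\<not> ?thesis"
    hence z: "R r r = 0" if "r \<in> Rw" for r using that by blast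
    have G0: "G b r j = 0" if "b < k" "r \<in> Rw" "j < m" for b r j
      using H1[of b b r r] that z[of r] by (intro sum_cmod_sq_zero[of "G b r" m j]) auto
    have "(\<Sum>b<k. \<Sum>r\<in>Rw. cnj (G b r 0) * G b r 0) = 0"
      by (intro sum.neutral ballI) (simp add: G0 m0)
    hence "of_real c * kd 0 0 = (0::complex)" using H2[of 0 0] m0 by simp
    thus False using c by simp
  qed
  then obtain r0 where r0: "r0 \<in> Rw" "R r0 r0 \<noteq> 0" by blast
  define N where "N = (\<Sum>j<m. (cmod (G 0 r0 j))^2)"
  have RN: "R r0 r0 = of_real N"
    using H1[of 0 0 r0 r0] k0 r0 by (simp add: N_def sum_self_real)
  have N0: "N > 0" using r0 RN N_def by (metis less_eq_real_def of_real_0 sum_nonneg zero_le_power2)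
  define s where "s = sqrt N"
  have s0: "s > 0" using N0 s_def by simp
  have ss: "of_real s * of_real s = (of_real N :: complex)"
    using N0 by (simp add: s_def flip: of_real_mult)
  define u where "u b j = G b r0 j / of_real s" for b j
  define w where "w r = R r r0 / of_real s" for r
  have Rsym: "R r0 r = cnj (R r r0)" if "r \<in> Rw" for r
  proof -
    have "R r0 r = (\<Sum>j<m. G 0 r0 j * cnj (G 0 r j))" using H1[of 0 0 r0 r] k0 r0 that by simp
    also have "\<dots> = cnj (\<Sum>j<m. G 0 r j * cnj (G 0 r0 j))" by (simp add: cnj_sum mult.commute)
    also have "\<dots> = cnj (R r r0)" using H1[of 0 0 r r0] k0 r0 that by simp
    finally show ?thesis .
  qed
  have u_on: "(\<Sum>j<m. u b j * cnj (u b' j)) = kd b b'" if "b<k" "b'<k" for b b'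
  proof -
    have "(\<Sum>j<m. u b j * cnj (u b' j)) = (\<Sum>j<m. G b r0 j * cnj (G b' r0 j)) / (of_real s * of_real s)"
      by (simp add: u_def sum_divide_distrib)
    also have "\<dots> = kd b b'" using H1[of b b' r0 r0] that r0 RN ss N0 by simp
    finally show ?thesis .
  qed
  have Gu: "(\<Sum>j<m. G b r j * cnj (u b' j)) = kd b b' * w r" if "b<k" "b'<k" "r\<in>Rw" for b b' r
  proof -
    have "(\<Sum>j<m. G b r j * cnj (u b' j)) = (\<Sum>j<m. G b r j * cnj (G b' r0 j)) / of_real s"
      by (simp add: u_def sum_divide_distrib)
    also have "\<dots> = kd b b' * w r" using H1[of b b' r r0] that r0 by (simp add: w_def)
    finally show ?thesis .
  qed
  have uG: "(\<Sum>j<m. u b j * cnj (G b' r j)) = kd b b' * cnj (w r)" if "b<k" "b'<k" "r\<in>Rw" for b b' r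
  proof -
    have "(\<Sum>j<m. u b j * cnj (G b' r j)) = (\<Sum>j<m. G b r0 j * cnj (G b' r j)) / of_real s"
      by (simp add: u_def sum_divide_distrib)
    also have "\<dots> = kd b b' * cnj (w r)" using H1[of b b' r0 r] that r0 Rsym[of r] by (simp add: w_def)
    finally show ?thesis .
  qed
  have Gwu: "G b r j = w r * u b j" if "b<k" "r\<in>Rw" "j<m" for b r j
  proof (rule ccontr)
    assume ne: "G b r j \<noteq> w r * u b j"
    define h where "h b j = G b r j - w r * u b j" for b j
    have hh: "(\<Sum>j<m. h b j * cnj (h b' j)) = kd b b' * (R r r - w r * cnj (w r))"
      if "b<k" "b'<k" for b b'
    proof -
      have "(\<Sum>j<m. h b j * cnj (h b' j)) = (\<Sum>j<m. G b r j * cnj (G b' r j))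
          - cnj (w r) * (\<Sum>j<m. G b r j * cnj (u b' j)) - w r * (\<Sum>j<m. u b j * cnj (G b' r j))
          + w r * cnj (w r) * (\<Sum>j<m. u b j * cnj (u b' j))"
        by (simp add: h_def sum_subtractf sum.distrib sum_distrib_left algebra_simps)
      also have "\<dots> = kd b b' * (R r r - w r * cnj (w r))"
        by (simp only: H1[OF that \<open>r\<in>Rw\<close> \<open>r\<in>Rw\<close>] Gu[OF that \<open>r\<in>Rw\<close>]
             uG[OF that \<open>r\<in>Rw\<close>] u_on[OF that]) (simp add: algebra_simps)
      finally show ?thesis .
    qed
    have hu: "(\<Sum>j<m. h b j * cnj (u b' j)) = 0" if "b<k" "b'<k" for b b'
    proof -
      have "(\<Sum>j<m. h b j * cnj (u b' j)) = (\<Sum>j<m. G b r j * cnj (u b' j))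
          - w r * (\<Sum>j<m. u b j * cnj (u b' j))"
        by (simp add: h_def sum_subtractf sum_distrib_left algebra_simps)
      also have "\<dots> = 0" by (simp only: Gu[OF that \<open>r\<in>Rw\<close>] u_on[OF that]) simp
      finally show ?thesis .
    qed
    have uh: "(\<Sum>j<m. u b j * cnj (h b' j)) = 0" if "b<k" "b'<k" for b b'
    proof -
      have "(\<Sum>j<m. u b j * cnj (h b' j)) = cnj (\<Sum>j<m. h b' j * cnj (u b j))"
        by (simp add: cnj_sum mult.commute)
      thus ?thesis using hu[OF that(2,1)] by simp
    qed
    define \<kappa> where "\<kappa> = (\<Sum>j<m. (cmod (h b j))^2)"
    have k_eq: "R r r - w r * cnj (w r) = of_real \<kappa>"
      using hh[of b b] \<open>b<k\<close> by (simp add: \<kappa>_def sum_self_real)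
    have "h b j \<noteq> 0" using ne by (simp add: h_def)
    hence "(cmod (h b j))^2 > 0" by simp
    moreover have "(cmod (h b j))^2 \<le> \<kappa>" unfolding \<kappa>_def using \<open>j<m\<close> by (intro member_le_sum) auto
    ultimately have kpos: "\<kappa> > 0" by linarith
    define t where "t = sqrt \<kappa>"
    have t0: "t > 0" using kpos t_def by simp
    have tt: "of_real t * of_real t = (of_real \<kappa> :: complex)"
      using kpos by (simp add: t_def flip: of_real_mult)
    define v where "v i j = (if i < k then u i j else h (i-k) j / of_real t)" for i j
    have "2*k \<le> m"
    proof (rule bessel[where n="2*k" and m=m and v=v])
      fix i i' assume i: "i < 2*k" "i' < 2*k"
      show "(\<Sum>j<m. v i j * cnj (v i' j)) = kd i i'"
      proof (cases "i < k")
        case True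
        show ?thesis
        proof (cases "i' < k")
          case True2: True
          then show ?thesis using True u_on by (simp add: v_def)
        next
          case False
          have "(\<Sum>j<m. v i j * cnj (v i' j)) = (\<Sum>j<m. u i j * cnj (h (i'-k) j)) / of_real t"
            using True False by (simp add: v_def sum_divide_distrib)
          also have "\<dots> = 0" using uh[of i "i'-k"] True False i by simp
          finally show ?thesis using True False by (simp add: kd_def)
        qed
      next
        case False
        show ?thesis
        proof (cases "i' < k")
          case True2: True
          have "(\<Sum>j<m. v i j * cnj (v i' j)) = (\<Sum>j<m. h (i-k) j * cnj (u i' j)) / of_real t"
            using True2 False by (simp add: v_def sum_divide_distrib)
          also have "\<dots> = 0" using hu[of "i-k" i'] True2 False i by simp
          finally show ?thesis using True2 False by (simp add: kd_def)
        next
          case False2: False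
          have "(\<Sum>j<m. v i j * cnj (v i' j)) = (\<Sum>j<m. h (i-k) j * cnj (h (i'-k) j)) / (of_real t * of_real t)"
            using False2 False by (simp add: v_def sum_divide_distrib)
          also have "\<dots> = kd (i-k) (i'-k)" using hh[of "i-k" "i'-k"] False2 False i k_eq tt kpos by simp
          also have "\<dots> = kd i i'" using False2 False by (auto simp: kd_def)
          finally show ?thesis .
        qed
      qed
    qed
    thus False using mk by simp
  qed
  define W where "W = (\<Sum>r\<in>Rw. (cmod (w r))^2)"
  define Q where "Q j j' = (\<Sum>b<k. cnj (u b j) * u b j')" for j j'
  have HQ: "of_real W * Q j j' = of_real c * kd j j'" if "j<m" "j'<m" for j j'
  proof -
    have "(\<Sum>b<k. \<Sum>r\<in>Rw. cnj (G b r j) * G b r j') = (\<Sum>b<k. \<Sum>r\<in>Rw. (w r * cnj (w r)) * (cnj (u b j) * u b j'))"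
      using that by (intro sum.cong refl) (simp add: Gwu mult_ac)
    also have "\<dots> = (\<Sum>r\<in>Rw. w r * cnj (w r)) * Q j j'"
      by (simp add: Q_def sum_distrib_left sum_distrib_right sum.swap[of _ "{..<k}"])
    also have "(\<Sum>r\<in>Rw. w r * cnj (w r)) = of_real W"
      by (simp add: W_def mult_cnj_self)
    finally show ?thesis using H2[OF that] by simp
  qed
  have W0: "W \<noteq> 0" using HQ[of 0 0] m0 c by auto
  have Qd: "Q j j' = of_real (c / W) * kd j j'" if "j<m" "j'<m" for j j'
    using HQ[OF that] W0 by (simp add: field_simps)
  have QQ: "(\<Sum>j'<m. Q j j' * Q j' j'') = Q j j''" for j j''
  proof -
    have "(\<Sum>j'<m. Q j j' * Q j' j'') = (\<Sum>j'<m. \<Sum>b<k. \<Sum>b'<k. cnj (u b j) * u b' j'' * (u b j' * cnj (u b' j')))"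
      unfolding Q_def sum_product by (intro sum.cong refl) (simp add: mult_ac)
    also have "\<dots> = (\<Sum>b<k. \<Sum>b'<k. cnj (u b j) * u b' j'' * (\<Sum>j'<m. u b j' * cnj (u b' j')))"
      by (simp only: sum_distrib_left sum.swap[of _ "{..<m}"])
    also have "\<dots> = (\<Sum>b<k. \<Sum>b'<k. cnj (u b j) * u b' j'' * kd b b')"
      by (intro sum.cong refl) (simp add: u_on)
    also have "\<dots> = Q j j''" by (simp add: Q_def)
    finally show ?thesis .
  qed
  define lam where "lam = c / W"
  have e: "Q 0 j' * Q j' 0 = kd 0 j' * (of_real lam * of_real lam)" if "j'<m" for j'
    using Qd that m0 by (auto simp: kd_def lam_def)
  have "(\<Sum>j'<m. Q 0 j' * Q j' 0) = (\<Sum>j'<m. kd 0 j' * (of_real lam * of_real lam))"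
    by (intro sum.cong refl) (simp add: e)
  also have "\<dots> = of_real lam * of_real lam" using m0 by (rule sum_kd_left')
  finally have "of_real lam * of_real lam = Q 0 0" using QQ[of 0 0] by simp
  also have "\<dots> = of_real lam" using Qd[of 0 0] m0 by (simp add: lam_def)
  finally have "of_real lam * of_real lam = (of_real lam :: complex)" .
  hence "lam * lam = lam" by (metis of_real_eq_iff of_real_mult)
  moreover have "lam \<noteq> 0" using c W0 by (simp add: lam_def)
  ultimately have l1: "lam = 1" by simp
  have Qid: "Q j j' = kd j j'" if "j<m" "j'<m" for j j'
    using Qd[OF that] l1 by (simp add: lam_def)
  have "(of_nat m :: complex) = (\<Sum>j<m. Q j j)" by (simp add: Qid)
  also have "\<dots> = (\<Sum>b<k. \<Sum>j<m. u b j * cnj (u b j))"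
    by (simp add: Q_def sum.swap[of _ "{..<m}"] mult.commute)
  also have "\<dots> = of_nat k" by (simp add: u_on)
  finally have "m = k" by simp
  moreover have "\<forall>j<m. \<forall>j'<m. (\<Sum>b<k. cnj (u b j) * u b j') = kd j j'"
    using Qid by (simp add: Q_def)
  ultimately show ?thesis using Gwu u_on by blast
qed

lemma mv3: "(\<Sum>i\<in>A. \<Sum>j\<in>B. \<Sum>k\<in>C. g i j k) = (\<Sum>j\<in>B. \<Sum>k\<in>C. \<Sum>i\<in>A. g i j k)"
proof -
  have "(\<Sum>i\<in>A. \<Sum>j\<in>B. \<Sum>k\<in>C. g i j k) = (\<Sum>j\<in>B. \<Sum>i\<in>A. \<Sum>k\<in>C. g i j k)" by (rule sum.swap)
  also have "\<dots> = (\<Sum>j\<in>B. \<Sum>k\<in>C. \<Sum>i\<in>A. g i j k)" by (intro sum.cong refl) (rule sum.swap)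
  finally show ?thesis .
qed

lemma mv4: "(\<Sum>i\<in>A. \<Sum>j\<in>B. \<Sum>k\<in>C. \<Sum>l\<in>E. g i j k l) = (\<Sum>j\<in>B. \<Sum>k\<in>C. \<Sum>l\<in>E. \<Sum>i\<in>A. g i j k l)"
proof -
  have "(\<Sum>i\<in>A. \<Sum>j\<in>B. \<Sum>k\<in>C. \<Sum>l\<in>E. g i j k l) = (\<Sum>j\<in>B. \<Sum>i\<in>A. \<Sum>k\<in>C. \<Sum>l\<in>E. g i j k l)" by (rule sum.swap)
  also have "\<dots> = (\<Sum>j\<in>B. \<Sum>k\<in>C. \<Sum>l\<in>E. \<Sum>i\<in>A. g i j k l)" by (intro sum.cong refl) (rule mv3)
  finally show ?thesis .
qed

lemma mv5: "(\<Sum>i\<in>A. \<Sum>j\<in>B. \<Sum>k\<in>C. \<Sum>l\<in>E. \<Sum>h\<in>F. g i j k l h) = (\<Sum>j\<in>B. \<Sum>k\<in>C. \<Sum>l\<in>E. \<Sum>h\<in>F. \<Sum>i\<in>A. g i j k l h)"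
proof -
  have "(\<Sum>i\<in>A. \<Sum>j\<in>B. \<Sum>k\<in>C. \<Sum>l\<in>E. \<Sum>h\<in>F. g i j k l h) = (\<Sum>j\<in>B. \<Sum>i\<in>A. \<Sum>k\<in>C. \<Sum>l\<in>E. \<Sum>h\<in>F. g i j k l h)" by (rule sum.swap)
  also have "\<dots> = (\<Sum>j\<in>B. \<Sum>k\<in>C. \<Sum>l\<in>E. \<Sum>h\<in>F. \<Sum>i\<in>A. g i j k l h)" by (intro sum.cong refl) (rule mv4)
  finally show ?thesis .
qed

lemma swap22: "(\<Sum>q\<in>A. \<Sum>a\<in>B. \<Sum>x\<in>C. \<Sum>y\<in>E. g q a x y) = (\<Sum>x\<in>C. \<Sum>y\<in>E. \<Sum>q\<in>A. \<Sum>a\<in>B. g q a x y)"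
proof -
  have "(\<Sum>q\<in>A. \<Sum>a\<in>B. \<Sum>x\<in>C. \<Sum>y\<in>E. g q a x y) = (\<Sum>q\<in>A. \<Sum>x\<in>C. \<Sum>y\<in>E. \<Sum>a\<in>B. g q a x y)"
    by (intro sum.cong refl) (rule mv3)
  also have "\<dots> = (\<Sum>x\<in>C. \<Sum>y\<in>E. \<Sum>q\<in>A. \<Sum>a\<in>B. g q a x y)" by (rule mv3)
  finally show ?thesis .
qed

lemma sum_prod4: "(\<Sum>r\<in>A\<times>B\<times>C\<times>E. g r) = (\<Sum>q\<in>A. \<Sum>a\<in>B. \<Sum>x\<in>C. \<Sum>y\<in>E. g (q,a,x,y))"
  by (simp add: sum.cartesian_product)

lemma sum_prod2: "(\<Sum>r\<in>A\<times>B. g r) = (\<Sum>q\<in>A. \<Sum>a\<in>B. g (q,a))"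
  by (simp add: sum.cartesian_product)

lemma mult_entry: "A \<in> carrier_mat n m \<Longrightarrow> B \<in> carrier_mat m l \<Longrightarrow> i<n \<Longrightarrow> j<l \<Longrightarrow>
   (A*B)$$(i,j) = (\<Sum>k<m. A$$(i,k) * B$$(k,j))"
  by (simp add: scalar_prod_def lessThan_atLeast0)

lemma adj_carrier[simp]: "A \<in> carrier_mat n m \<Longrightarrow> adj A \<in> carrier_mat m n"
  by (simp add: adj_def)

lemma adj_index[simp]: "A \<in> carrier_mat n m \<Longrightarrow> i < m \<Longrightarrow> j < n \<Longrightarrow> adj A $$ (i,j) = cnj (A $$ (j,i))"
  by (simp add: adj_def)

lemma adj_dims[simp]: "dim_row (adj A) = dim_col A" "dim_col (adj A) = dim_row A"
  by (simp_all add: adj_def)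

lemma adj_mat[simp]: "adj (mat n m f) = mat m n (\<lambda>(i,j). cnj (f (j,i)))"
  by (rule eq_matI) (auto simp: adj_def)

lemma one_mat_kd: "i < n \<Longrightarrow> j < n \<Longrightarrow> (1\<^sub>m n :: complex mat) $$ (i,j) = kd i j"
  by (simp add: kd_def)

lemma cnj_orth:
  assumes "(\<Sum>b<k. cnj (u b j) * u b j') = kd j j'"
  shows "(\<Sum>b<k. u b j * cnj (u b j')) = kd j j'"
proof -
  have "cnj (\<Sum>b<k. cnj (u b j) * u b j') = kd j j'" using assms by simp
  thus ?thesis by (simp add: cnj_sum)
qed

lemma unitary_from:
  fixes g :: "nat \<Rightarrow> nat \<Rightarrow> complex"
  assumes rows: "\<And>i j. i<n \<Longrightarrow> j<n \<Longrightarrow> (\<Sum>k<n. g i k * cnj (g j k)) = kd i j"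
  and cols: "\<And>i j. i<n \<Longrightarrow> j<n \<Longrightarrow> (\<Sum>k<n. g k i * cnj (g k j)) = kd i j"
  shows "unitary_mat n (mat n n (\<lambda>(i,j). g i j))"
proof -
  define A where "A = mat n n (\<lambda>(i,j). g i j)"
  have A: "A \<in> carrier_mat n n" by (simp add: A_def)
  have "A * adj A = 1\<^sub>m n"
  proof (rule eq_matI)
    fix i j assume ij: "i < dim_row (1\<^sub>m n :: complex mat)" "j < dim_col (1\<^sub>m n :: complex mat)"
    hence "(A * adj A) $$ (i,j) = (\<Sum>k<n. A$$(i,k) * adj A $$ (k,j))"
      using A by (intro mult_entry[where m=n]) auto
    also have "\<dots> = (\<Sum>k<n. g i k * cnj (g j k))" using ij A by (intro sum.cong refl) (simp add: A_def)
    also have "\<dots> = 1\<^sub>m n $$ (i,j)" using ij rows by (simp add: one_mat_kd)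
    finally show "(A * adj A) $$ (i,j) = 1\<^sub>m n $$ (i,j)" .
  qed (use A in auto)
  moreover have "adj A * A = 1\<^sub>m n"
  proof (rule eq_matI)
    fix i j assume ij: "i < dim_row (1\<^sub>m n :: complex mat)" "j < dim_col (1\<^sub>m n :: complex mat)"
    hence "(adj A * A) $$ (i,j) = (\<Sum>k<n. adj A$$(i,k) * A $$ (k,j))"
      using A by (intro mult_entry[where m=n]) auto
    also have "\<dots> = cnj (\<Sum>k<n. g k i * cnj (g k j))" using ij A
      by (simp add: A_def cnj_sum mult.commute)
    also have "\<dots> = 1\<^sub>m n $$ (i,j)" using ij cols by (simp add: one_mat_kd)
    finally show "(adj A * A) $$ (i,j) = 1\<^sub>m n $$ (i,j)" .
  qed (use A in auto)
  ultimately show ?thesis using A by (simp add: unitary_mat_def A_def)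
qed

definition combAB_fun :: "nat \<Rightarrow> nat \<Rightarrow> nat \<Rightarrow> (nat\<Rightarrow>nat\<Rightarrow>nat\<Rightarrow>nat\<Rightarrow>nat\<Rightarrow>nat\<Rightarrow>complex) \<Rightarrow> bool" where
 "combAB_fun p d f T \<longleftrightarrow> (\<exists>R2 :: (nat \<times> nat \<times> nat \<times> nat) \<Rightarrow> (nat \<times> nat \<times> nat \<times> nat) \<Rightarrow> complex.
    \<exists>R1 :: (nat \<times> nat) \<Rightarrow> (nat \<times> nat) \<Rightarrow> complex.
   (\<forall>q<p. \<forall>ao<d. \<forall>bo<d. \<forall>ai<d. \<forall>bi<d. \<forall>q'<p. \<forall>ao'<d. \<forall>bo'<d. \<forall>ai'<d. \<forall>bi'<d.
      (\<Sum>fi<f. T ai bi fi q ao bo * cnj (T ai' bi' fi q' ao' bo')) = kd bo bo' * R2 (q,ao,ai,bi) (q',ao',ai',bi')) \<and>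
   (\<forall>q<p. \<forall>ao<d. \<forall>ai<d. \<forall>q'<p. \<forall>ao'<d. \<forall>ai'<d.
      (\<Sum>bi<d. R2 (q,ao,ai,bi) (q',ao',ai',bi)) = kd ao ao' * R1 (q,ai) (q',ai')) \<and>
   (\<forall>q<p. \<forall>q'<p. (\<Sum>ai<d. R1 (q,ai) (q',ai)) = kd q q'))"

definition swp :: "(nat\<Rightarrow>nat\<Rightarrow>nat\<Rightarrow>nat\<Rightarrow>nat\<Rightarrow>nat\<Rightarrow>complex) \<Rightarrow> (nat\<Rightarrow>nat\<Rightarrow>nat\<Rightarrow>nat\<Rightarrow>nat\<Rightarrow>nat\<Rightarrow>complex)" where
  "swp T = (\<lambda>x y f q a b. T y x f q b a)"

lemma comb_AB_fun: "comb_AB p d d d d f V = combAB_fun p d f (opent d d f d d V)"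
  unfolding comb_AB_def combAB_fun_def choi_def by simp

lemma comb_BA_fun: "comb_BA p d d d d f V = combAB_fun p d f (swp (opent d d f d d V))"
proof
  assume "comb_BA p d d d d f V"
  then obtain R2 R1 where h1: "\<And>q ao bo ai bi q' ao' bo' ai' bi'. q<p \<Longrightarrow> ao<d \<Longrightarrow> bo<d \<Longrightarrow> ai<d \<Longrightarrow> bi<d \<Longrightarrow>
      q'<p \<Longrightarrow> ao'<d \<Longrightarrow> bo'<d \<Longrightarrow> ai'<d \<Longrightarrow> bi'<d \<Longrightarrow>
        (\<Sum>fi<f. choi d d d d f V (q,ao,bo,ai,bi,fi) (q',ao',bo',ai',bi',fi))
          = kd ao ao' * R2 (q,bo,ai,bi) (q',bo',ai',bi')"
     and h2: "\<And>q bo bi q' bo' bi'. q<p \<Longrightarrow> bo<d \<Longrightarrow> bi<d \<Longrightarrow> q'<p \<Longrightarrow> bo'<d \<Longrightarrow> bi'<d \<Longrightarrow>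
        (\<Sum>ai<d. R2 (q,bo,ai,bi) (q',bo',ai,bi')) = kd bo bo' * R1 (q,bi) (q',bi')"
     and h3: "\<And>q q'. q<p \<Longrightarrow> q'<p \<Longrightarrow> (\<Sum>bi<d. R1 (q,bi) (q',bi)) = kd q q'"
    unfolding comb_BA_def by (elim exE conjE) (simp only: all_simps(1-6) imp_conjL)
  define R2' where "R2' = (\<lambda>(q::nat,a::nat,x::nat,y::nat) (q'::nat,a'::nat,x'::nat,y'::nat). R2 (q,a,y,x) (q',a',y',x'))"
  show "combAB_fun p d f (swp (opent d d f d d V))"
    unfolding combAB_fun_def
  proof (intro exI conjI)
    show "\<forall>q<p. \<forall>ao<d. \<forall>bo<d. \<forall>ai<d. \<forall>bi<d. \<forall>q'<p. \<forall>ao'<d. \<forall>bo'<d. \<forall>ai'<d. \<forall>bi'<d.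
      (\<Sum>fi<f. swp (opent d d f d d V) ai bi fi q ao bo * cnj (swp (opent d d f d d V) ai' bi' fi q' ao' bo'))
        = kd bo bo' * R2' (q,ao,ai,bi) (q',ao',ai',bi')"
    proof (intro allI impI)
      fix q ao bo ai bi q' ao' bo' ai' bi'
      assume b: "q<p" "ao<d" "bo<d" "ai<d" "bi<d" "q'<p" "ao'<d" "bo'<d" "ai'<d" "bi'<d"
      show "(\<Sum>fi<f. swp (opent d d f d d V) ai bi fi q ao bo * cnj (swp (opent d d f d d V) ai' bi' fi q' ao' bo'))
        = kd bo bo' * R2' (q,ao,ai,bi) (q',ao',ai',bi')"
        using h1[of q bo ao bi ai q' bo' ao' bi' ai'] b by (simp add: swp_def choi_def R2'_def)
    qed
    show "\<forall>q<p. \<forall>ao<d. \<forall>ai<d. \<forall>q'<p. \<forall>ao'<d. \<forall>ai'<d.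
      (\<Sum>bi<d. R2' (q,ao,ai,bi) (q',ao',ai',bi)) = kd ao ao' * R1 (q,ai) (q',ai')"
      using h2 by (simp add: R2'_def)
    show "\<forall>q<p. \<forall>q'<p. (\<Sum>ai<d. R1 (q,ai) (q',ai)) = kd q q'" using h3 by simp
  qed
next
  assume "combAB_fun p d f (swp (opent d d f d d V))"
  then obtain R2 R1 where h1: "\<And>q ao bo ai bi q' ao' bo' ai' bi'. q<p \<Longrightarrow> ao<d \<Longrightarrow> bo<d \<Longrightarrow> ai<d \<Longrightarrow> bi<d \<Longrightarrow>
      q'<p \<Longrightarrow> ao'<d \<Longrightarrow> bo'<d \<Longrightarrow> ai'<d \<Longrightarrow> bi'<d \<Longrightarrow>
      (\<Sum>fi<f. swp (opent d d f d d V) ai bi fi q ao bo * cnj (swp (opent d d f d d V) ai' bi' fi q' ao' bo')) = kd bo bo' * R2 (q,ao,ai,bi) (q',ao',ai',bi')"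
   and h2: "\<And>q ao ai q' ao' ai'. q<p \<Longrightarrow> ao<d \<Longrightarrow> ai<d \<Longrightarrow> q'<p \<Longrightarrow> ao'<d \<Longrightarrow> ai'<d \<Longrightarrow>
      (\<Sum>bi<d. R2 (q,ao,ai,bi) (q',ao',ai',bi)) = kd ao ao' * R1 (q,ai) (q',ai')"
   and h3: "\<And>q q'. q<p \<Longrightarrow> q'<p \<Longrightarrow> (\<Sum>ai<d. R1 (q,ai) (q',ai)) = kd q q'"
    unfolding combAB_fun_def by (elim exE conjE) (simp only: all_simps(1-6) imp_conjL)
  define R2' where "R2' = (\<lambda>(q::nat,a::nat,x::nat,y::nat) (q'::nat,a'::nat,x'::nat,y'::nat). R2 (q,a,y,x) (q',a',y',x'))"
  show "comb_BA p d d d d f V"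
    unfolding comb_BA_def
  proof (intro exI conjI)
    show "\<forall>q<p. \<forall>ao<d. \<forall>bo<d. \<forall>ai<d. \<forall>bi<d.
      \<forall>q'<p. \<forall>ao'<d. \<forall>bo'<d. \<forall>ai'<d. \<forall>bi'<d.
        (\<Sum>fi<f. choi d d d d f V (q,ao,bo,ai,bi,fi) (q',ao',bo',ai',bi',fi))
          = kd ao ao' * R2' (q,bo,ai,bi) (q',bo',ai',bi')"
    proof (intro allI impI)
      fix q ao bo ai bi q' ao' bo' ai' bi'
      assume b: "q<p" "ao<d" "bo<d" "ai<d" "bi<d" "q'<p" "ao'<d" "bo'<d" "ai'<d" "bi'<d"
      show "(\<Sum>fi<f. choi d d d d f V (q,ao,bo,ai,bi,fi) (q',ao',bo',ai',bi',fi))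
          = kd ao ao' * R2' (q,bo,ai,bi) (q',bo',ai',bi')"
        using h1[of q bo ao bi ai q' bo' ao' bi' ai'] b by (simp add: swp_def choi_def R2'_def)
    qed
    show "\<forall>q<p. \<forall>bo<d. \<forall>bi<d. \<forall>q'<p. \<forall>bo'<d. \<forall>bi'<d.
        (\<Sum>ai<d. R2' (q,bo,ai,bi) (q',bo',ai,bi')) = kd bo bo' * R1 (q,bi) (q',bi')"
      using h2 by (simp add: R2'_def)
    show "\<forall>q<p. \<forall>q'<p. (\<Sum>bi<d. R1 (q,bi) (q',bi)) = kd q q'" using h3 by simp
  qed
qed

lemma level1:
  fixes T :: "nat \<Rightarrow> nat \<Rightarrow> nat \<Rightarrow> nat \<Rightarrow> nat \<Rightarrow> nat \<Rightarrow> complex"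
  assumes roworth: "\<And>x y f x' y' f'. x<d \<Longrightarrow> y<d \<Longrightarrow> f<p \<Longrightarrow> x'<d \<Longrightarrow> y'<d \<Longrightarrow> f'<p \<Longrightarrow>
      (\<Sum>q<p. \<Sum>a<d. \<Sum>b<d. T x y f q a b * cnj (T x' y' f' q a b)) = kd x x' * kd y y' * kd f f'"
  and c1: "\<And>q a b x y q' a' b' x' y'. q<p \<Longrightarrow> a<d \<Longrightarrow> b<d \<Longrightarrow> x<d \<Longrightarrow> y<d \<Longrightarrow>
      q'<p \<Longrightarrow> a'<d \<Longrightarrow> b'<d \<Longrightarrow> x'<d \<Longrightarrow> y'<d \<Longrightarrow>
      (\<Sum>fi<p. T x y fi q a b * cnj (T x' y' fi q' a' b')) = kd b b' * R2 (q,a,x,y) (q',a',x',y')"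
  and p0: "0<p" and p2: "p < 2*d"
  shows "p = d \<and> (\<exists>w u. (\<forall>b<d. \<forall>r\<in>{..<p} \<times> {..<d} \<times> {..<d} \<times> {..<d}. \<forall>j<p. 
              (case r of (q,a,x,y) \<Rightarrow> T x y j q a b) = w r * u b j) \<and>
            (\<forall>b<d. \<forall>b'<d. (\<Sum>j<p. u b j * cnj (u b' j)) = kd b b') \<and>
            (\<forall>j<p. \<forall>j'<p. (\<Sum>b<d. cnj (u b j) * u b j') = kd j j'))"
proof -
  have d0: "0 < d" using p0 p2 by simp
  define Rw where "Rw = {..<p} \<times> {..<d} \<times> {..<d} \<times> {..<d}"
  define G where "G b r f = (case r of (q,a,x,y) \<Rightarrow> T x y f q a b)" for b r f
  have H1: "(\<Sum>j<p. G b r j * cnj (G b' r' j)) = kd b b' * R2 r r'"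
      if "b<d" "b'<d" "r\<in>Rw" "r'\<in>Rw" for b b' r r'
  proof -
    obtain q a x y where r: "r = (q,a,x,y)" by (cases r) auto
    obtain q' a' x' y' where r': "r' = (q',a',x',y')" by (cases r') auto
    have b: "q<p" "a<d" "x<d" "y<d" "q'<p" "a'<d" "x'<d" "y'<d" using that by (auto simp: r r' Rw_def)
    show ?thesis using c1[OF b(1,2) that(1) b(3,4,5,6) that(2) b(7,8)] by (simp add: r r' G_def)
  qed
  have H2: "(\<Sum>b<d. \<Sum>r\<in>Rw. cnj (G b r j) * G b r j') = of_real (real (d*d)) * kd j j'"
      if "j<p" "j'<p" for j j'
  proof -
    have "(\<Sum>b<d. \<Sum>r\<in>Rw. cnj (G b r j) * G b r j') =
        (\<Sum>b<d. \<Sum>q<p. \<Sum>a<d. \<Sum>x<d. \<Sum>y<d. cnj (T x y j q a b) * T x y j' q a b)"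
      unfolding Rw_def sum_prod4 G_def by simp
    also have "\<dots> = (\<Sum>q<p. \<Sum>a<d. \<Sum>x<d. \<Sum>y<d. \<Sum>b<d. cnj (T x y j q a b) * T x y j' q a b)"
      by (rule mv5)
    also have "\<dots> = (\<Sum>x<d. \<Sum>y<d. \<Sum>q<p. \<Sum>a<d. \<Sum>b<d. cnj (T x y j q a b) * T x y j' q a b)"
      by (rule swap22)
    also have "\<dots> = (\<Sum>x<d. \<Sum>y<d. kd j j')"
    proof (intro sum.cong refl)
      fix x y assume xy: "x \<in> {..<d}" "y \<in> {..<d}"
      have "(\<Sum>q<p. \<Sum>a<d. \<Sum>b<d. T x y j' q a b * cnj (T x y j q a b)) = kd j' j"
        using roworth[of x y j' x y j] that xy by simp
      thus "(\<Sum>q<p. \<Sum>a<d. \<Sum>b<d. cnj (T x y j q a b) * T x y j' q a b) = kd j j'"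
        by (simp add: mult.commute kd_sym)
    qed
    also have "\<dots> = of_real (real (d*d)) * kd j j'" by simp
    finally show ?thesis .
  qed
  have "p = d \<and> (\<exists>w u. (\<forall>b<d. \<forall>r\<in>Rw. \<forall>j<p. G b r j = w r * u b j) \<and>
            (\<forall>b<d. \<forall>b'<d. (\<Sum>j<p. u b j * cnj (u b' j)) = kd b b') \<and>
            (\<forall>j<p. \<forall>j'<p. (\<Sum>b<d. cnj (u b j) * u b j') = kd j j'))"
    by (rule rank_one[where R=R2 and c="real (d*d)", OF _ H1 H2]) (use p0 p2 d0 in \<open>auto simp: Rw_def\<close>)
  thus ?thesis unfolding Rw_def G_def .
qed

lemma pm2: "(A * B) * cnj (C * E) = (A * cnj C) * (B * cnj (E::complex))"
  by (simp add: mult_ac)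

lemma pm3: "(A * B * F) * cnj (C * E * H) = (A * cnj C) * ((B * cnj E) * (F * cnj (H::complex)))"
  by (simp add: mult_ac)

lemma fact_sum2: "(\<Sum>y\<in>Y. \<Sum>f\<in>F. A * (B y * C f)) = A * ((\<Sum>y\<in>Y. B y) * (\<Sum>f\<in>F. (C f :: complex)))"
proof -
  have "A * ((\<Sum>y\<in>Y. B y) * (\<Sum>f\<in>F. C f)) = A * (\<Sum>y\<in>Y. \<Sum>f\<in>F. B y * C f)"
    by (simp only: sum_product)
  also have "\<dots> = (\<Sum>y\<in>Y. \<Sum>f\<in>F. A * (B y * C f))" by (simp add: sum_distrib_left)
  finally show ?thesis by simp
qed

lemma level2:
  fixes T :: "nat \<Rightarrow> nat \<Rightarrow> nat \<Rightarrow> nat \<Rightarrow> nat \<Rightarrow> nat \<Rightarrow> complex"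
  assumes roworth: "\<And>x y f x' y' f'. x<d \<Longrightarrow> y<d \<Longrightarrow> f<d \<Longrightarrow> x'<d \<Longrightarrow> y'<d \<Longrightarrow> f'<d \<Longrightarrow>
      (\<Sum>q<d. \<Sum>a<d. \<Sum>b<d. T x y f q a b * cnj (T x' y' f' q a b)) = kd x x' * kd y y' * kd f f'"
  and c1: "\<And>q a b x y q' a' b' x' y'. q<d \<Longrightarrow> a<d \<Longrightarrow> b<d \<Longrightarrow> x<d \<Longrightarrow> y<d \<Longrightarrow>
      q'<d \<Longrightarrow> a'<d \<Longrightarrow> b'<d \<Longrightarrow> x'<d \<Longrightarrow> y'<d \<Longrightarrow>
      (\<Sum>fi<d. T x y fi q a b * cnj (T x' y' fi q' a' b')) = kd b b' * R2 (q,a,x,y) (q',a',x',y')"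
  and c2: "\<And>q a x q' a' x'. q<d \<Longrightarrow> a<d \<Longrightarrow> x<d \<Longrightarrow> q'<d \<Longrightarrow> a'<d \<Longrightarrow> x'<d \<Longrightarrow>
      (\<Sum>y<d. R2 (q,a,x,y) (q',a',x',y)) = kd a a' * R1 (q,x) (q',x')"
  and Tw: "\<And>x y f q a b. x<d \<Longrightarrow> y<d \<Longrightarrow> f<d \<Longrightarrow> q<d \<Longrightarrow> a<d \<Longrightarrow> b<d \<Longrightarrow> T x y f q a b = w (q,a,x,y) * u b f"
  and u1: "\<And>b b'. b<d \<Longrightarrow> b'<d \<Longrightarrow> (\<Sum>j<d. u b j * cnj (u b' j)) = kd b b'"
  and u2': "\<And>j j'. j<d \<Longrightarrow> j'<d \<Longrightarrow> (\<Sum>b<d. u b j * cnj (u b j')) = kd j j'"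
  and d0: "0 < d"
  shows "\<exists>z e. (\<forall>a<d. \<forall>r\<in>{..<d} \<times> {..<d}. \<forall>j<d. (case r of (q,x) \<Rightarrow> w (q,a,x,j)) = z r * e a j) \<and>
            (\<forall>a<d. \<forall>a'<d. (\<Sum>j<d. e a j * cnj (e a' j)) = kd a a') \<and>
            (\<forall>j<d. \<forall>j'<d. (\<Sum>a<d. cnj (e a j) * e a j') = kd j j')"
proof -
  have R2w: "R2 (q,a,x,y) (q',a',x',y') = w (q,a,x,y) * cnj (w (q',a',x',y'))"
    if "q<d" "a<d" "x<d" "y<d" "q'<d" "a'<d" "x'<d" "y'<d" for q a x y q' a' x' y'
  proof -
    have "R2 (q,a,x,y) (q',a',x',y') = (\<Sum>fi<d. T x y fi q a 0 * cnj (T x' y' fi q' a' 0))"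
      using c1[of q a 0 x y q' a' 0 x' y'] that d0 by simp
    also have "\<dots> = (\<Sum>fi<d. (w (q,a,x,y) * cnj (w (q',a',x',y'))) * (u 0 fi * cnj (u 0 fi)))"
      using that d0 by (intro sum.cong refl) (simp add: Tw pm2)
    also have "\<dots> = (w (q,a,x,y) * cnj (w (q',a',x',y'))) * (\<Sum>fi<d. u 0 fi * cnj (u 0 fi))"
      by (simp only: sum_distrib_left)
    also have "\<dots> = w (q,a,x,y) * cnj (w (q',a',x',y'))"
      using u1[of 0 0] d0 by simp
    finally show ?thesis .
  qed
  define Rw2 where "Rw2 = {..<d} \<times> {..<d}"
  define G2 where "G2 a r y = (case r of (q,x) \<Rightarrow> w (q,a,x,y))" for a r y
  have H1: "(\<Sum>j<d. G2 a r j * cnj (G2 a' r' j)) = kd a a' * R1 r r'"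
      if "a<d" "a'<d" "r\<in>Rw2" "r'\<in>Rw2" for a a' r r'
  proof -
    obtain q x where r: "r = (q,x)" by (cases r) auto
    obtain q' x' where r': "r' = (q',x')" by (cases r') auto
    have qx: "q<d" "x<d" "q'<d" "x'<d" using that by (auto simp: r r' Rw2_def)
    have "(\<Sum>j<d. G2 a r j * cnj (G2 a' r' j)) = (\<Sum>y<d. R2 (q,a,x,y) (q',a',x',y))"
      using that qx by (intro sum.cong refl) (simp add: G2_def r r' R2w)
    also have "\<dots> = kd a a' * R1 r r'" using c2[of q a x q' a' x'] that qx by (simp add: r r')
    finally show ?thesis .
  qed
  have row2: "(\<Sum>q<d. \<Sum>a<d. cnj (w (q,a,x,j)) * w (q,a,x,j')) = kd j j'"
    if "x<d" "j<d" "j'<d" for x j j'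
  proof -
    have "(\<Sum>q<d. \<Sum>a<d. \<Sum>b<d. T x j' 0 q a b * cnj (T x j 0 q a b)) = kd j' j"
      using roworth[of x j' 0 x j 0] that d0 by simp
    moreover have "(\<Sum>q<d. \<Sum>a<d. \<Sum>b<d. T x j' 0 q a b * cnj (T x j 0 q a b)) =
        (\<Sum>q<d. \<Sum>a<d. \<Sum>b<d. (w (q,a,x,j') * cnj (w (q,a,x,j))) * (u b 0 * cnj (u b 0)))"
      using that d0 by (intro sum.cong refl) (simp add: Tw pm2)
    moreover have "\<dots> = (\<Sum>q<d. \<Sum>a<d. (w (q,a,x,j') * cnj (w (q,a,x,j))) * (\<Sum>b<d. u b 0 * cnj (u b 0)))"
      by (simp only: sum_distrib_left)
    moreover have "(\<Sum>b<d. u b 0 * cnj (u b 0)) = 1" using u2'[of 0 0] d0 by simp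
    ultimately have "(\<Sum>q<d. \<Sum>a<d. w (q,a,x,j') * cnj (w (q,a,x,j))) = kd j' j" by simp
    thus ?thesis by (simp add: mult.commute kd_sym)
  qed
  have H2: "(\<Sum>a<d. \<Sum>r\<in>Rw2. cnj (G2 a r j) * G2 a r j') = of_real (real d) * kd j j'"
      if "j<d" "j'<d" for j j'
  proof -
    have "(\<Sum>a<d. \<Sum>r\<in>Rw2. cnj (G2 a r j) * G2 a r j') =
        (\<Sum>a<d. \<Sum>q<d. \<Sum>x<d. cnj (w (q,a,x,j)) * w (q,a,x,j'))"
      unfolding Rw2_def sum_prod2 G2_def by simp
    also have "\<dots> = (\<Sum>q<d. \<Sum>x<d. \<Sum>a<d. cnj (w (q,a,x,j)) * w (q,a,x,j'))" by (rule mv3)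
    also have "\<dots> = (\<Sum>x<d. \<Sum>q<d. \<Sum>a<d. cnj (w (q,a,x,j)) * w (q,a,x,j'))" by (rule sum.swap)
    also have "\<dots> = (\<Sum>x<d. kd j j')" using that by (intro sum.cong refl) (simp add: row2)
    also have "\<dots> = of_real (real d) * kd j j'" by simp
    finally show ?thesis .
  qed
  have "d = d \<and> (\<exists>z e. (\<forall>a<d. \<forall>r\<in>Rw2. \<forall>j<d. G2 a r j = z r * e a j) \<and>
            (\<forall>a<d. \<forall>a'<d. (\<Sum>j<d. e a j * cnj (e a' j)) = kd a a') \<and>
            (\<forall>j<d. \<forall>j'<d. (\<Sum>a<d. cnj (e a j) * e a j') = kd j j'))"
    by (rule rank_one[where R=R1 and c="real d", OF _ H1 H2]) (use d0 in \<open>auto simp: Rw2_def\<close>)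
  thus ?thesis unfolding Rw2_def G2_def by (rule conjunct2)
qed

lemma comb_factor:
  fixes T :: "nat \<Rightarrow> nat \<Rightarrow> nat \<Rightarrow> nat \<Rightarrow> nat \<Rightarrow> nat \<Rightarrow> complex"
  assumes colorth: "\<And>q a b q' a' b'. q<p \<Longrightarrow> a<d \<Longrightarrow> b<d \<Longrightarrow> q'<p \<Longrightarrow> a'<d \<Longrightarrow> b'<d \<Longrightarrow>
      (\<Sum>x<d. \<Sum>y<d. \<Sum>f<p. T x y f q a b * cnj (T x y f q' a' b')) = kd q q' * kd a a' * kd b b'"
  and roworth: "\<And>x y f x' y' f'. x<d \<Longrightarrow> y<d \<Longrightarrow> f<p \<Longrightarrow> x'<d \<Longrightarrow> y'<d \<Longrightarrow> f'<p \<Longrightarrow>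
      (\<Sum>q<p. \<Sum>a<d. \<Sum>b<d. T x y f q a b * cnj (T x' y' f' q a b)) = kd x x' * kd y y' * kd f f'"
  and comb: "combAB_fun p d p T" and p0: "0<p" and p2: "p < 2*d"
  shows "p = d \<and> (\<exists>U0 U1 U2. unitary_mat d U0 \<and> unitary_mat d U1 \<and> unitary_mat d U2 \<and>
     (\<forall>x<d. \<forall>y<d. \<forall>f<d. \<forall>q<d. \<forall>a<d. \<forall>b<d. T x y f q a b = U0 $$ (x,q) * U1 $$ (y,a) * U2 $$ (f,b)))"
proof -
  have d0: "0 < d" using p0 p2 by simp
  obtain R2 R1 where c1: "\<And>q a b x y q' a' b' x' y'. q<p \<Longrightarrow> a<d \<Longrightarrow> b<d \<Longrightarrow> x<d \<Longrightarrow> y<d \<Longrightarrow>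
      q'<p \<Longrightarrow> a'<d \<Longrightarrow> b'<d \<Longrightarrow> x'<d \<Longrightarrow> y'<d \<Longrightarrow>
      (\<Sum>fi<p. T x y fi q a b * cnj (T x' y' fi q' a' b')) = kd b b' * R2 (q,a,x,y) (q',a',x',y')"
    and c2: "\<And>q a x q' a' x'. q<p \<Longrightarrow> a<d \<Longrightarrow> x<d \<Longrightarrow> q'<p \<Longrightarrow> a'<d \<Longrightarrow> x'<d \<Longrightarrow>
      (\<Sum>y<d. R2 (q,a,x,y) (q',a',x',y)) = kd a a' * R1 (q,x) (q',x')"
    using comb unfolding combAB_fun_def by (elim exE conjE) (simp only: all_simps(1-6) imp_conjL)
  note L1 = level1[OF roworth c1 p0 p2]
  hence pd: "p = d" by (rule conjunct1)
  from L1 have "\<exists>w u. (\<forall>b<d. \<forall>r\<in>{..<p} \<times> {..<d} \<times> {..<d} \<times> {..<d}. \<forall>j<p. 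
              (case r of (q,a,x,y) \<Rightarrow> T x y j q a b) = w r * u b j) \<and>
            (\<forall>b<d. \<forall>b'<d. (\<Sum>j<p. u b j * cnj (u b' j)) = kd b b') \<and>
            (\<forall>j<p. \<forall>j'<p. (\<Sum>b<d. cnj (u b j) * u b j') = kd j j')" by (rule conjunct2)
  then obtain w u where
    Gw: "\<forall>b<d. \<forall>r\<in>{..<p} \<times> {..<d} \<times> {..<d} \<times> {..<d}. \<forall>j<p. 
              (case r of (q,a,x,y) \<Rightarrow> T x y j q a b) = w r * u b j"
    and u1': "\<forall>b<d. \<forall>b'<d. (\<Sum>j<p. u b j * cnj (u b' j)) = kd b b'"
    and u2: "\<forall>j<p. \<forall>j'<p. (\<Sum>b<d. cnj (u b j) * u b j') = kd j j'"
    by (elim exE conjE)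
  have Tw: "T x y f q a b = w (q,a,x,y) * u b f" if "x<d" "y<d" "f<d" "q<d" "a<d" "b<d" for x y f q a b
    using Gw that pd by auto
  have u1: "(\<Sum>j<d. u b j * cnj (u b' j)) = kd b b'" if "b<d" "b'<d" for b b'
    using u1' that pd by auto
  have u2': "(\<Sum>b<d. u b j * cnj (u b j')) = kd j j'" if "j<d" "j'<d" for j j'
  proof -
    have "(\<Sum>b<d. cnj (u b j) * u b j') = kd j j'" using u2 that pd by auto
    thus ?thesis by (rule cnj_orth)
  qed
  have roworth': "\<And>x y f x' y' f'. x<d \<Longrightarrow> y<d \<Longrightarrow> f<d \<Longrightarrow> x'<d \<Longrightarrow> y'<d \<Longrightarrow> f'<d \<Longrightarrow>
      (\<Sum>q<d. \<Sum>a<d. \<Sum>b<d. T x y f q a b * cnj (T x' y' f' q a b)) = kd x x' * kd y y' * kd f f'"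
    using roworth pd by simp
  have c1': "\<And>q a b x y q' a' b' x' y'. q<d \<Longrightarrow> a<d \<Longrightarrow> b<d \<Longrightarrow> x<d \<Longrightarrow> y<d \<Longrightarrow>
      q'<d \<Longrightarrow> a'<d \<Longrightarrow> b'<d \<Longrightarrow> x'<d \<Longrightarrow> y'<d \<Longrightarrow>
      (\<Sum>fi<d. T x y fi q a b * cnj (T x' y' fi q' a' b')) = kd b b' * R2 (q,a,x,y) (q',a',x',y')"
    using c1 pd by simp
  have c2': "\<And>q a x q' a' x'. q<d \<Longrightarrow> a<d \<Longrightarrow> x<d \<Longrightarrow> q'<d \<Longrightarrow> a'<d \<Longrightarrow> x'<d \<Longrightarrow>
      (\<Sum>y<d. R2 (q,a,x,y) (q',a',x',y)) = kd a a' * R1 (q,x) (q',x')"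
    using c2 pd by simp
  have ex: "\<exists>z e. (\<forall>a<d. \<forall>r\<in>{..<d} \<times> {..<d}. \<forall>j<d. (case r of (q,x) \<Rightarrow> w (q,a,x,j)) = z r * e a j) \<and>
            (\<forall>a<d. \<forall>a'<d. (\<Sum>j<d. e a j * cnj (e a' j)) = kd a a') \<and>
            (\<forall>j<d. \<forall>j'<d. (\<Sum>a<d. cnj (e a j) * e a j') = kd j j')"
    by (rule level2, (rule roworth' c1' c2' Tw u1 u2' d0; assumption)+)
  then obtain z e where
    Gz: "\<forall>a<d. \<forall>r\<in>{..<d} \<times> {..<d}. \<forall>j<d. (case r of (q,x) \<Rightarrow> w (q,a,x,j)) = z r * e a j"
    and e1': "\<forall>a<d. \<forall>a'<d. (\<Sum>j<d. e a j * cnj (e a' j)) = kd a a'"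
    and e2: "\<forall>j<d. \<forall>j'<d. (\<Sum>a<d. cnj (e a j) * e a j') = kd j j'"
    by (elim exE conjE)
  have e1: "(\<Sum>j<d. e a j * cnj (e a' j)) = kd a a'" if "a<d" "a'<d" for a a'
    using e1' that by auto
  have e2': "(\<Sum>a<d. e a j * cnj (e a j')) = kd j j'" if "j<d" "j'<d" for j j'
  proof -
    have "(\<Sum>a<d. cnj (e a j) * e a j') = kd j j'" using e2 that by auto
    thus ?thesis by (rule cnj_orth)
  qed
  have Tz: "T x y f q a b = z (q,x) * e a y * u b f" if "x<d" "y<d" "f<d" "q<d" "a<d" "b<d" for x y f q a b
  proof -
    have "w (q,a,x,y) = z (q,x) * e a y" using Gz that by auto
    thus ?thesis using Tw[OF that] by simp
  qed
  have ee: "(\<Sum>y<d. e 0 y * cnj (e 0 y)) = 1" using e1[of 0 0] d0 by simp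
  have uu: "(\<Sum>f<d. u 0 f * cnj (u 0 f)) = 1" using u1[of 0 0] d0 by simp
  have ee': "(\<Sum>a<d. e a 0 * cnj (e a 0)) = 1" using e2'[of 0 0] d0 by simp
  have uu': "(\<Sum>b<d. u b 0 * cnj (u b 0)) = 1" using u2'[of 0 0] d0 by simp
  have zcol: "(\<Sum>x<d. z (q,x) * cnj (z (q',x))) = kd q q'" if "q<d" "q'<d" for q q'
  proof -
    have "(\<Sum>x<d. \<Sum>y<d. \<Sum>f<d. T x y f q 0 0 * cnj (T x y f q' 0 0)) =
        (\<Sum>x<d. \<Sum>y<d. \<Sum>f<d. (z (q,x) * cnj (z (q',x))) * ((e 0 y * cnj (e 0 y)) * (u 0 f * cnj (u 0 f))))"
      using that d0 by (intro sum.cong refl) (simp add: Tz pm3)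
    also have "\<dots> = (\<Sum>x<d. (z (q,x) * cnj (z (q',x))) * ((\<Sum>y<d. e 0 y * cnj (e 0 y)) * (\<Sum>f<d. u 0 f * cnj (u 0 f))))"
      by (simp only: fact_sum2)
    also have "\<dots> = (\<Sum>x<d. z (q,x) * cnj (z (q',x)))" by (simp add: ee uu)
    finally show ?thesis using colorth[of q 0 0 q' 0 0] that d0 pd by simp
  qed
  have zrow: "(\<Sum>q<d. z (q,x) * cnj (z (q,x'))) = kd x x'" if "x<d" "x'<d" for x x'
  proof -
    have "(\<Sum>q<d. \<Sum>a<d. \<Sum>b<d. T x 0 0 q a b * cnj (T x' 0 0 q a b)) =
        (\<Sum>q<d. \<Sum>a<d. \<Sum>b<d. (z (q,x) * cnj (z (q,x'))) * ((e a 0 * cnj (e a 0)) * (u b 0 * cnj (u b 0))))"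
      using that d0 by (intro sum.cong refl) (simp add: Tz pm3)
    also have "\<dots> = (\<Sum>q<d. (z (q,x) * cnj (z (q,x'))) * ((\<Sum>a<d. e a 0 * cnj (e a 0)) * (\<Sum>b<d. u b 0 * cnj (u b 0))))"
      by (simp only: fact_sum2)
    also have "\<dots> = (\<Sum>q<d. z (q,x) * cnj (z (q,x')))" by (simp add: ee' uu')
    finally show ?thesis using roworth[of x 0 0 x' 0 0] that d0 pd by simp
  qed
  define U0 where "U0 = mat d d (\<lambda>(i,j). (\<lambda>x q. z (q,x)) i j)"
  define U1 where "U1 = mat d d (\<lambda>(i,j). (\<lambda>y a. e a y) i j)"
  define U2 where "U2 = mat d d (\<lambda>(i,j). (\<lambda>f b. u b f) i j)"
  have "unitary_mat d U0" unfolding U0_def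
    by (rule unitary_from) (simp_all add: zrow zcol)
  moreover have "unitary_mat d U1" unfolding U1_def
    by (rule unitary_from) (simp_all add: e1 e2')
  moreover have "unitary_mat d U2" unfolding U2_def
    by (rule unitary_from) (simp_all add: u1 u2')
  moreover have "\<forall>x<d. \<forall>y<d. \<forall>f<d. \<forall>q<d. \<forall>a<d. \<forall>b<d. T x y f q a b = U0 $$ (x,q) * U1 $$ (y,a) * U2 $$ (f,b)"
    by (simp add: U0_def U1_def U2_def Tz)
  ultimately show ?thesis using pd by blast
qed

lemma kron_dims[simp]: "dim_row (kron A B) = dim_row A * dim_row B" "dim_col (kron A B) = dim_col A * dim_col B"
  by (simp_all add: kron_def)

lemma kron_index: "i < dim_row A * dim_row B \<Longrightarrow> j < dim_col A * dim_col B \<Longrightarrow>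
  kron A B $$ (i,j) = A $$ (i div dim_row B, j div dim_col B) * B $$ (i mod dim_row B, j mod dim_col B)"
  by (simp add: kron_def)

lemma tidx3_div_mod: "i3 < n3 \<Longrightarrow> tidx3 n2 n3 i1 i2 i3 div n3 = i1*n2+i2 \<and> tidx3 n2 n3 i1 i2 i3 mod n3 = i3"
  unfolding tidx3_def by (rule tidx2_div_mod)

lemma lt_mult_add: "i < n \<Longrightarrow> j < (m::nat) \<Longrightarrow> i*m + j < n*m"
proof -
  assume "i < n" "j < m"
  hence "i*m + j < (i+1)*m" by simp
  also have "\<dots> \<le> n*m" using \<open>i<n\<close> by (intro mult_right_mono) auto
  finally show ?thesis .
qed

lemma kronJ:
  assumes J: "J \<in> carrier_mat D p1" and b: "q<D" "a'<d" "b'<d" "q1<p1" "a<d" "b<d"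
  shows "kron (kron J (1\<^sub>m d)) (1\<^sub>m d) $$ (tidx3 d d q a' b', tidx3 d d q1 a b) = J$$(q,q1) * kd a' a * kd b' b"
proof -
  have r1: "q*d+a' < D*d" and c1: "q1*d+a < p1*d" using b by (auto intro: lt_mult_add)
  have r: "tidx3 d d q a' b' < D*d*d" and c: "tidx3 d d q1 a b < p1*d*d"
    using b by (auto intro!: tidx3_bound)
  have "kron (kron J (1\<^sub>m d)) (1\<^sub>m d) $$ (tidx3 d d q a' b', tidx3 d d q1 a b) =
      kron J (1\<^sub>m d) $$ (q*d+a', q1*d+a) * (1\<^sub>m d) $$ (b', b)"
    using r c J b by (simp add: kron_index tidx3_div_mod)
  also have "kron J (1\<^sub>m d) $$ (q*d+a', q1*d+a) = J$$(q,q1) * (1\<^sub>m d) $$ (a',a)"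
    using r1 c1 J b by (simp add: kron_index tidx2_div_mod)
  finally show ?thesis using b by (simp add: one_mat_kd)
qed

lemma kronK:
  assumes K: "K \<in> carrier_mat D f1" and b: "x<d" "y<d" "f<D" "x'<d" "y'<d" "f'<f1"
  shows "kron (kron (1\<^sub>m d) (1\<^sub>m d)) K $$ (tidx3 d D x y f, tidx3 d f1 x' y' f') = kd x x' * kd y y' * K$$(f,f')"
proof -
  have r1: "x*d+y < d*d" and c1: "x'*d+y' < d*d" using b by (auto intro: lt_mult_add)
  have r: "tidx3 d D x y f < d*d*D" and c: "tidx3 d f1 x' y' f' < d*d*f1"
    using b by (auto intro!: tidx3_bound)
  have "kron (kron (1\<^sub>m d) (1\<^sub>m d)) K $$ (tidx3 d D x y f, tidx3 d f1 x' y' f') =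
      kron (1\<^sub>m d) (1\<^sub>m d) $$ (x*d+y, x'*d+y') * K $$ (f, f')"
    using r c K b by (simp add: kron_index tidx3_div_mod)
  also have "kron (1\<^sub>m d) (1\<^sub>m d) $$ (x*d+y, x'*d+y') = (1\<^sub>m d :: complex mat) $$ (x,x') * (1\<^sub>m d) $$ (y,y')"
    using r1 c1 b by (simp add: kron_index tidx2_div_mod)
  finally show ?thesis using b by (simp add: one_mat_kd)
qed

lemma collapse2:
  assumes "a < d" "b < d"
  shows "(\<Sum>q<n. \<Sum>a'<d. \<Sum>b'<d. g q a' b' * (J q * kd a' a * kd b' b)) = (\<Sum>q<n. g q a b * J q)"
proof (rule sum.cong[OF refl])
  fix q
  have e: "\<And>a' b'. g q a' b' * (J q * kd a' a * kd b' b) = (g q a' b' * J q * kd a' a) * kd b' b"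
    by (simp add: mult_ac)
  have "(\<Sum>a'<d. \<Sum>b'<d. g q a' b' * (J q * kd a' a * kd b' b)) = (\<Sum>a'<d. \<Sum>b'<d. (g q a' b' * J q * kd a' a) * kd b' b)"
    by (simp only: e)
  also have "\<dots> = (\<Sum>a'<d. g q a' b * J q * kd a' a)" by (simp only: sum_kd_right[OF assms(2)])
  also have "\<dots> = g q a b * J q" by (simp only: sum_kd_right[OF assms(1)])
  finally show "(\<Sum>a'<d. \<Sum>b'<d. g q a' b' * (J q * kd a' a * kd b' b)) = g q a b * J q" .
qed

lemma collapse3:
  assumes "x < d" "y < d"
  shows "(\<Sum>x'<d. \<Sum>y'<d. \<Sum>f'<n. kd x x' * kd y y' * K f' * g x' y' f') = (\<Sum>f'<n. K f' * g x y f')"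
proof -
  have "(\<Sum>x'<d. \<Sum>y'<d. \<Sum>f'<n. kd x x' * kd y y' * K f' * g x' y' f') =
      (\<Sum>x'<d. \<Sum>y'<d. kd x x' * (kd y y' * (\<Sum>f'<n. K f' * g x' y' f')))"
    by (simp add: sum_distrib_left mult.assoc)
  also have "\<dots> = (\<Sum>x'<d. kd x x' * (\<Sum>f'<n. K f' * g x' y f'))"
    using assms by (simp add: sum_distrib_left[symmetric])
  also have "\<dots> = (\<Sum>f'<n. K f' * g x y f')" using assms by simp
  finally show ?thesis .
qed

lemma dsum_entry:
  assumes U: "U \<in> carrier_mat (d*d*D) (D*d*d)" and J: "J \<in> carrier_mat D p1" and K: "K \<in> carrier_mat D f1"
    and U1: "U1 \<in> carrier_mat (d*d*f1) (p1*d*d)"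
    and eq: "U * kron (kron J (1\<^sub>m d)) (1\<^sub>m d) = kron (kron (1\<^sub>m d) (1\<^sub>m d)) K * U1"
    and b: "x<d" "y<d" "f<D" "q1<p1" "a<d" "b<d"
  shows "(\<Sum>q<D. opent d d D d d U x y f q a b * J$$(q,q1)) = (\<Sum>f1'<f1. K$$(f,f1') * opent d d f1 d d U1 x y f1' q1 a b)"
proof -
  define i where "i = tidx3 d D x y f"
  define j where "j = tidx3 d d q1 a b"
  have i: "i < d*d*D" and j: "j < p1*d*d" using b by (auto simp: i_def j_def intro!: tidx3_bound)
  have KJ: "kron (kron J (1\<^sub>m d)) (1\<^sub>m d) \<in> carrier_mat (D*d*d) (p1*d*d)" using J by auto
  have KK: "kron (kron (1\<^sub>m d) (1\<^sub>m d)) K \<in> carrier_mat (d*d*D) (d*d*f1)" using K by auto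
  have "(U * kron (kron J (1\<^sub>m d)) (1\<^sub>m d)) $$ (i,j) = (\<Sum>k<D*d*d. U$$(i,k) * kron (kron J (1\<^sub>m d)) (1\<^sub>m d) $$ (k,j))"
    using U KJ i j by (rule mult_entry)
  also have "\<dots> = (\<Sum>q<D. \<Sum>a'<d. \<Sum>b'<d. U$$(i,tidx3 d d q a' b') * kron (kron J (1\<^sub>m d)) (1\<^sub>m d) $$ (tidx3 d d q a' b',j))"
    by (rule sum3_idx)
  also have "\<dots> = (\<Sum>q<D. \<Sum>a'<d. \<Sum>b'<d. U$$(i,tidx3 d d q a' b') * (J$$(q,q1) * kd a' a * kd b' b))"
    using b J by (intro sum.cong refl) (simp add: j_def kronJ)
  also have "\<dots> = (\<Sum>q<D. U$$(i,tidx3 d d q a b) * J$$(q,q1))"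
    by (rule collapse2[OF b(5,6)])
  finally have L: "(U * kron (kron J (1\<^sub>m d)) (1\<^sub>m d)) $$ (i,j) = (\<Sum>q<D. opent d d D d d U x y f q a b * J$$(q,q1))"
    by (simp add: opent_def i_def)
  have "(kron (kron (1\<^sub>m d) (1\<^sub>m d)) K * U1) $$ (i,j) = (\<Sum>k<d*d*f1. kron (kron (1\<^sub>m d) (1\<^sub>m d)) K $$ (i,k) * U1 $$ (k,j))"
    using KK U1 i j by (rule mult_entry)
  also have "\<dots> = (\<Sum>x'<d. \<Sum>y'<d. \<Sum>f'<f1. kron (kron (1\<^sub>m d) (1\<^sub>m d)) K $$ (i,tidx3 d f1 x' y' f') * U1 $$ (tidx3 d f1 x' y' f',j))"
    by (rule sum3_idx)
  also have "\<dots> = (\<Sum>x'<d. \<Sum>y'<d. \<Sum>f'<f1. kd x x' * kd y y' * K$$(f,f') * U1 $$ (tidx3 d f1 x' y' f',j))"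
    using b K by (intro sum.cong refl) (simp add: i_def kronK)
  also have "\<dots> = (\<Sum>f'<f1. K$$(f,f') * U1 $$ (tidx3 d f1 x y f',j))"
    by (rule collapse3[OF b(1,2)])
  finally have R: "(kron (kron (1\<^sub>m d) (1\<^sub>m d)) K * U1) $$ (i,j) = (\<Sum>f1'<f1. K$$(f,f1') * opent d d f1 d d U1 x y f1' q1 a b)"
    by (simp add: opent_def j_def)
  show ?thesis using L R eq by simp
qed

lemma unitary_orth:
  assumes V: "V \<in> carrier_mat (d*d*f) (p*d*d)" and U: "unitary_mat (p*d*d) V"
  shows "\<And>x y fi x' y' f'. x<d \<Longrightarrow> y<d \<Longrightarrow> fi<f \<Longrightarrow> x'<d \<Longrightarrow> y'<d \<Longrightarrow> f'<f \<Longrightarrow>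
      (\<Sum>q<p. \<Sum>a<d. \<Sum>b<d. opent d d f d d V x y fi q a b * cnj (opent d d f d d V x' y' f' q a b)) = kd x x' * kd y y' * kd fi f'"
    and "\<And>q a b q' a' b'. q<p \<Longrightarrow> a<d \<Longrightarrow> b<d \<Longrightarrow> q'<p \<Longrightarrow> a'<d \<Longrightarrow> b'<d \<Longrightarrow>
      (\<Sum>x<d. \<Sum>y<d. \<Sum>fi<f. opent d d f d d V x y fi q a b * cnj (opent d d f d d V x y fi q' a' b')) = kd q q' * kd a a' * kd b b'"
proof -
  have VV: "V * adj V = 1\<^sub>m (p*d*d)" "adj V * V = 1\<^sub>m (p*d*d)" and Vc: "V \<in> carrier_mat (p*d*d) (p*d*d)"
    using U by (auto simp: unitary_mat_def)
  have dims: "d*d*f = p*d*d" using V Vc by auto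
  show "(\<Sum>q<p. \<Sum>a<d. \<Sum>b<d. opent d d f d d V x y fi q a b * cnj (opent d d f d d V x' y' f' q a b)) = kd x x' * kd y y' * kd fi f'"
    if b: "x<d" "y<d" "fi<f" "x'<d" "y'<d" "f'<f" for x y fi x' y' f'
  proof -
    define i where "i = tidx3 d f x y fi"
    define i' where "i' = tidx3 d f x' y' f'"
    have i: "i < d*d*f" "i' < d*d*f" using b by (auto simp: i_def i'_def intro!: tidx3_bound)
    have "(V * adj V) $$ (i,i') = (\<Sum>k<p*d*d. V$$(i,k) * adj V $$ (k,i'))"
      using V i by (intro mult_entry[where m="p*d*d"]) auto
    also have "\<dots> = (\<Sum>k<p*d*d. V$$(i,k) * cnj (V $$ (i',k)))"
      using V i by (intro sum.cong refl) simp
    also have "\<dots> = (\<Sum>q<p. \<Sum>a<d. \<Sum>b<d. opent d d f d d V x y fi q a b * cnj (opent d d f d d V x' y' f' q a b))"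
      by (simp add: sum3_idx opent_def i_def i'_def)
    finally have "(\<Sum>q<p. \<Sum>a<d. \<Sum>b<d. opent d d f d d V x y fi q a b * cnj (opent d d f d d V x' y' f' q a b)) = (1\<^sub>m (p*d*d) :: complex mat) $$ (i,i')"
      using VV by simp
    also have "\<dots> = kd i i'" using i dims by (simp add: one_mat_kd)
    also have "\<dots> = kd x x' * kd y y' * kd fi f'" using b by (auto simp: kd_def i_def i'_def tidx3_eq)
    finally show ?thesis .
  qed
  show "(\<Sum>x<d. \<Sum>y<d. \<Sum>fi<f. opent d d f d d V x y fi q a b * cnj (opent d d f d d V x y fi q' a' b')) = kd q q' * kd a a' * kd b b'"
    if b: "q<p" "a<d" "b<d" "q'<p" "a'<d" "b'<d" for q a b q' a' b'
  proof -
    define j where "j = tidx3 d d q a b"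
    define j' where "j' = tidx3 d d q' a' b'"
    have j: "j < p*d*d" "j' < p*d*d" using b by (auto simp: j_def j'_def intro!: tidx3_bound)
    have "(adj V * V) $$ (j',j) = (\<Sum>k<d*d*f. adj V $$ (j',k) * V$$(k,j))"
      using V j by (intro mult_entry[where m="d*d*f"]) auto
    also have "\<dots> = (\<Sum>k<d*d*f. V$$(k,j) * cnj (V $$ (k,j')))"
      using V j by (intro sum.cong refl) (simp add: mult.commute)
    also have "\<dots> = (\<Sum>x<d. \<Sum>y<d. \<Sum>fi<f. opent d d f d d V x y fi q a b * cnj (opent d d f d d V x y fi q' a' b'))"
      by (simp add: sum3_idx opent_def j_def j'_def)
    finally have "(\<Sum>x<d. \<Sum>y<d. \<Sum>fi<f. opent d d f d d V x y fi q a b * cnj (opent d d f d d V x y fi q' a' b')) = (1\<^sub>m (p*d*d) :: complex mat) $$ (j',j)"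
      using VV by simp
    also have "\<dots> = kd j' j" using j by (simp add: one_mat_kd)
    also have "\<dots> = kd q q' * kd a a' * kd b b'" using b by (auto simp: kd_def j_def j'_def tidx3_eq)
    finally show ?thesis .
  qed
qed

lemma block_complete:
  assumes J1: "J1 \<in> carrier_mat D p1" and J2: "J2 \<in> carrier_mat D p2" and pp: "p1 + p2 = D"
    and o1: "adj J1 * J1 = 1\<^sub>m p1" and o2: "adj J2 * J2 = 1\<^sub>m p2" and o12: "adj J1 * J2 = 0\<^sub>m p1 p2"
  shows "\<And>q q'. q<D \<Longrightarrow> q'<D \<Longrightarrow> (\<Sum>k<p1. J1$$(q,k) * cnj (J1$$(q',k))) + (\<Sum>k<p2. J2$$(q,k) * cnj (J2$$(q',k))) = kd q q'"
    and "unitary_mat D (mat D D (\<lambda>(i,j). if i<p1 then cnj (J1$$(j,i)) else cnj (J2$$(j,i-p1))))"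
proof -
  define Jf where "Jf i k = (if k < p1 then J1$$(i,k) else J2$$(i,k-p1))" for i k
  define g where "g i j = cnj (Jf j i)" for i j
  have gdef: "mat D D (\<lambda>(i,j). if i<p1 then cnj (J1$$(j,i)) else cnj (J2$$(j,i-p1))) = mat D D (\<lambda>(i,j). g i j)"
    by (rule eq_matI) (auto simp: g_def Jf_def)
  have e11: "(\<Sum>k<D. cnj (J1$$(k,i)) * J1$$(k,j)) = kd i j" if "i<p1" "j<p1" for i j
  proof -
    have "(adj J1 * J1) $$ (i,j) = (\<Sum>k<D. adj J1 $$ (i,k) * J1$$(k,j))"
      using J1 that by (intro mult_entry[where m=D]) auto
    also have "\<dots> = (\<Sum>k<D. cnj (J1$$(k,i)) * J1$$(k,j))" using J1 that by (intro sum.cong refl) simp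
    finally show ?thesis using o1 that by (simp add: kd_def)
  qed
  have e22: "(\<Sum>k<D. cnj (J2$$(k,i)) * J2$$(k,j)) = kd i j" if "i<p2" "j<p2" for i j
  proof -
    have "(adj J2 * J2) $$ (i,j) = (\<Sum>k<D. adj J2 $$ (i,k) * J2$$(k,j))"
      using J2 that by (intro mult_entry[where m=D]) auto
    also have "\<dots> = (\<Sum>k<D. cnj (J2$$(k,i)) * J2$$(k,j))" using J2 that by (intro sum.cong refl) simp
    finally show ?thesis using o2 that by (simp add: kd_def)
  qed
  have e12: "(\<Sum>k<D. cnj (J1$$(k,i)) * J2$$(k,j)) = 0" if "i<p1" "j<p2" for i j
  proof -
    have "(adj J1 * J2) $$ (i,j) = (\<Sum>k<D. adj J1 $$ (i,k) * J2$$(k,j))"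
      using J1 J2 that by (intro mult_entry[where m=D]) auto
    also have "\<dots> = (\<Sum>k<D. cnj (J1$$(k,i)) * J2$$(k,j))" using J1 that by (intro sum.cong refl) simp
    finally show ?thesis using o12 that by simp
  qed
  have e21: "(\<Sum>k<D. cnj (J2$$(k,i)) * J1$$(k,j)) = 0" if "i<p2" "j<p1" for i j
  proof -
    have "(\<Sum>k<D. cnj (J2$$(k,i)) * J1$$(k,j)) = cnj (\<Sum>k<D. cnj (J1$$(k,j)) * J2$$(k,i))"
      by (simp add: cnj_sum mult.commute)
    thus ?thesis using e12[OF that(2,1)] by simp
  qed
  have rows: "(\<Sum>k<D. g i k * cnj (g j k)) = kd i j" if "i<D" "j<D" for i j
  proof -
    have "(\<Sum>k<D. g i k * cnj (g j k)) = (\<Sum>k<D. cnj (Jf k i) * Jf k j)" by (simp add: g_def)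
    also have "\<dots> = kd i j"
    proof (cases "i < p1")
      case True
      show ?thesis
      proof (cases "j < p1")
        case True2: True
        show ?thesis using e11[OF True True2] True True2 by (simp add: Jf_def)
      next
        case False
        have "j - p1 < p2" using that False pp by simp
        thus ?thesis using e12[OF True] True False by (simp add: Jf_def kd_def)
      qed
    next
      case False
      have i2: "i - p1 < p2" using that False pp by simp
      show ?thesis
      proof (cases "j < p1")
        case True2: True
        thus ?thesis using e21[OF i2 True2] False by (simp add: Jf_def kd_def)
      next
        case False2: False
        have "j - p1 < p2" using that False2 pp by simp
        moreover have "kd (i-p1) (j-p1) = kd i j" using False False2 by (auto simp: kd_def)
        ultimately show ?thesis using e22[OF i2] False False2 by (simp add: Jf_def)
      qed
    qed
    finally show ?thesis .
  qed
  define A where "A = mat D D (\<lambda>(i,j). g i j)"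
  have A: "A \<in> carrier_mat D D" by (simp add: A_def)
  have AA: "A * adj A = 1\<^sub>m D"
  proof (rule eq_matI)
    fix i j assume ij: "i < dim_row (1\<^sub>m D :: complex mat)" "j < dim_col (1\<^sub>m D :: complex mat)"
    hence "(A * adj A) $$ (i,j) = (\<Sum>k<D. A$$(i,k) * adj A $$ (k,j))"
      using A by (intro mult_entry[where m=D]) auto
    also have "\<dots> = (\<Sum>k<D. g i k * cnj (g j k))" using ij A by (intro sum.cong refl) (simp add: A_def)
    also have "\<dots> = 1\<^sub>m D $$ (i,j)" using ij rows by (simp add: one_mat_kd)
    finally show "(A * adj A) $$ (i,j) = 1\<^sub>m D $$ (i,j)" .
  qed (use A in auto)
  have AA2: "adj A * A = 1\<^sub>m D"
    using mat_mult_left_right_inverse[OF A _ AA] A by simp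
  have cols: "(\<Sum>k<D. Jf i k * cnj (Jf j k)) = kd i j" if "i<D" "j<D" for i j
  proof -
    have "(adj A * A) $$ (i,j) = (\<Sum>k<D. adj A $$ (i,k) * A$$(k,j))"
      using A that by (intro mult_entry[where m=D]) auto
    also have "\<dots> = (\<Sum>k<D. Jf i k * cnj (Jf j k))" using that A
      by (intro sum.cong refl) (simp add: A_def g_def mult.commute)
    finally show ?thesis using AA2 that by (simp add: kd_def)
  qed
  show "(\<Sum>k<p1. J1$$(q,k) * cnj (J1$$(q',k))) + (\<Sum>k<p2. J2$$(q,k) * cnj (J2$$(q',k))) = kd q q'"
    if "q<D" "q'<D" for q q'
  proof -
    have "(\<Sum>k<D. Jf q k * cnj (Jf q' k)) = (\<Sum>k<p1. Jf q k * cnj (Jf q' k)) + (\<Sum>k<p2. Jf q (p1+k) * cnj (Jf q' (p1+k)))"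
      unfolding pp[symmetric] by (rule sum_lessThan_add)
    also have "\<dots> = (\<Sum>k<p1. J1$$(q,k) * cnj (J1$$(q',k))) + (\<Sum>k<p2. J2$$(q,k) * cnj (J2$$(q',k)))"
      by (simp add: Jf_def)
    finally show ?thesis using cols[OF that] by simp
  qed
  show "unitary_mat D (mat D D (\<lambda>(i,j). if i<p1 then cnj (J1$$(j,i)) else cnj (J2$$(j,i-p1))))"
    using A AA AA2 by (simp add: gdef unitary_mat_def A_def)
qed

lemma rep_formula:
  fixes T :: "nat \<Rightarrow> nat \<Rightarrow> nat \<Rightarrow> nat \<Rightarrow> nat \<Rightarrow> nat \<Rightarrow> complex"
  assumes e1: "\<And>q1. q1<p1 \<Longrightarrow> (\<Sum>q<D. T x y f q a b * J1$$(q,q1)) = S1 q1"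
    and e2: "\<And>q2. q2<p2 \<Longrightarrow> (\<Sum>q<D. T x y f q a b * J2$$(q,q2)) = S2 q2"
    and compl: "\<And>q q'. q<D \<Longrightarrow> q'<D \<Longrightarrow> (\<Sum>k<p1. J1$$(q,k) * cnj (J1$$(q',k))) + (\<Sum>k<p2. J2$$(q,k) * cnj (J2$$(q',k))) = kd q q'"
    and q: "q' < D"
  shows "T x y f q' a b = (\<Sum>q1<p1. S1 q1 * cnj (J1$$(q',q1))) + (\<Sum>q2<p2. S2 q2 * cnj (J2$$(q',q2)))"
proof -
  have "(\<Sum>q1<p1. S1 q1 * cnj (J1$$(q',q1))) = (\<Sum>q1<p1. \<Sum>q<D. T x y f q a b * (J1$$(q,q1) * cnj (J1$$(q',q1))))"
    by (intro sum.cong refl) (simp add: e1[symmetric] sum_distrib_right mult.assoc)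
  also have "\<dots> = (\<Sum>q<D. T x y f q a b * (\<Sum>q1<p1. J1$$(q,q1) * cnj (J1$$(q',q1))))"
    by (simp only: sum_distrib_left) (rule sum.swap)
  finally have s1: "(\<Sum>q1<p1. S1 q1 * cnj (J1$$(q',q1))) = (\<Sum>q<D. T x y f q a b * (\<Sum>q1<p1. J1$$(q,q1) * cnj (J1$$(q',q1))))" .
  have "(\<Sum>q2<p2. S2 q2 * cnj (J2$$(q',q2))) = (\<Sum>q2<p2. \<Sum>q<D. T x y f q a b * (J2$$(q,q2) * cnj (J2$$(q',q2))))"
    by (intro sum.cong refl) (simp add: e2[symmetric] sum_distrib_right mult.assoc)
  also have "\<dots> = (\<Sum>q<D. T x y f q a b * (\<Sum>q2<p2. J2$$(q,q2) * cnj (J2$$(q',q2))))"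
    by (simp only: sum_distrib_left) (rule sum.swap)
  finally have s2: "(\<Sum>q2<p2. S2 q2 * cnj (J2$$(q',q2))) = (\<Sum>q<D. T x y f q a b * (\<Sum>q2<p2. J2$$(q,q2) * cnj (J2$$(q',q2))))" .
  have "(\<Sum>q1<p1. S1 q1 * cnj (J1$$(q',q1))) + (\<Sum>q2<p2. S2 q2 * cnj (J2$$(q',q2))) =
      (\<Sum>q<D. T x y f q a b * ((\<Sum>q1<p1. J1$$(q,q1) * cnj (J1$$(q',q1))) + (\<Sum>q2<p2. J2$$(q,q2) * cnj (J2$$(q',q2)))))"
    unfolding s1 s2 by (simp add: sum.distrib distrib_left)
  also have "\<dots> = (\<Sum>q<D. T x y f q a b * kd q q')"
    using q by (intro sum.cong refl) (simp add: compl)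
  also have "\<dots> = T x y f q' a b" using q by simp
  finally show ?thesis by simp
qed

lemma iso_inner:
  assumes K: "\<And>i i'. i<n \<Longrightarrow> i'<n \<Longrightarrow> (\<Sum>f<m. K f i * cnj (K f i')) = kd i i'"
  shows "(\<Sum>f<m. (\<Sum>i<n. K f i * X i) * cnj (\<Sum>i<n. K f i * Y i)) = (\<Sum>i<n. X i * cnj (Y i))"
proof -
  have "(\<Sum>f<m. (\<Sum>i<n. K f i * X i) * cnj (\<Sum>i<n. K f i * Y i)) =
      (\<Sum>f<m. \<Sum>i<n. \<Sum>i'<n. (X i * cnj (Y i')) * (K f i * cnj (K f i')))"
    unfolding cnj_sum complex_cnj_mult sum_product by (intro sum.cong refl) (simp add: mult_ac)
  also have "\<dots> = (\<Sum>i<n. \<Sum>i'<n. \<Sum>f<m. (X i * cnj (Y i')) * (K f i * cnj (K f i')))"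
    by (rule mv3)
  also have "\<dots> = (\<Sum>i<n. \<Sum>i'<n. (X i * cnj (Y i')) * (\<Sum>f<m. K f i * cnj (K f i')))"
    by (simp only: sum_distrib_left)
  also have "\<dots> = (\<Sum>i<n. \<Sum>i'<n. (X i * cnj (Y i')) * kd i i')"
    by (intro sum.cong refl) (simp add: K)
  also have "\<dots> = (\<Sum>i<n. X i * cnj (Y i))" by simp
  finally show ?thesis .
qed

lemma bilin:
  "(\<Sum>f<m. (\<Sum>i<n. X f i * c i) * cnj (\<Sum>i<n. Y f i * c' i)) =
   (\<Sum>i<n. \<Sum>i'<n. (c i * cnj (c' i')) * (\<Sum>f<m. X f i * cnj (Y f i')))"
proof -
  have "(\<Sum>f<m. (\<Sum>i<n. X f i * c i) * cnj (\<Sum>i<n. Y f i * c' i)) =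
      (\<Sum>f<m. \<Sum>i<n. \<Sum>i'<n. (c i * cnj (c' i')) * (X f i * cnj (Y f i')))"
    unfolding cnj_sum complex_cnj_mult sum_product by (intro sum.cong refl) (simp add: mult_ac)
  also have "\<dots> = (\<Sum>i<n. \<Sum>i'<n. \<Sum>f<m. (c i * cnj (c' i')) * (X f i * cnj (Y f i')))"
    by (rule mv3)
  also have "\<dots> = (\<Sum>i<n. \<Sum>i'<n. (c i * cnj (c' i')) * (\<Sum>f<m. X f i * cnj (Y f i')))"
    by (simp only: sum_distrib_left)
  finally show ?thesis .
qed

lemma pull_k: "(\<Sum>i\<in>A. \<Sum>j\<in>B. c i j * (k * r i j)) = (k::complex) * (\<Sum>i\<in>A. \<Sum>j\<in>B. c i j * r i j)"
  by (simp add: sum_distrib_left mult_ac)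

lemma comb_conj:
  fixes T T1 :: "nat \<Rightarrow> nat \<Rightarrow> nat \<Rightarrow> nat \<Rightarrow> nat \<Rightarrow> nat \<Rightarrow> complex" and K J :: "nat \<Rightarrow> nat \<Rightarrow> complex"
  assumes comb: "combAB_fun D d D T1"
  and Kc: "\<And>i i'. i<D \<Longrightarrow> i'<D \<Longrightarrow> (\<Sum>f<D. K f i * cnj (K f i')) = kd i i'"
  and Jr: "\<And>q q'. q<D \<Longrightarrow> q'<D \<Longrightarrow> (\<Sum>k<D. J q k * cnj (J q' k)) = kd q q'"
  and rep: "\<And>x y f q a b. x<d \<Longrightarrow> y<d \<Longrightarrow> f<D \<Longrightarrow> q<D \<Longrightarrow> a<d \<Longrightarrow> b<d \<Longrightarrow>
      T x y f q a b = (\<Sum>q1<D. (\<Sum>f1<D. K f f1 * T1 x y f1 q1 a b) * cnj (J q q1))"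
  shows "combAB_fun D d D T"
proof -
  obtain R2 R1 where c1: "\<And>q a b x y q' a' b' x' y'. q<D \<Longrightarrow> a<d \<Longrightarrow> b<d \<Longrightarrow> x<d \<Longrightarrow> y<d \<Longrightarrow>
      q'<D \<Longrightarrow> a'<d \<Longrightarrow> b'<d \<Longrightarrow> x'<d \<Longrightarrow> y'<d \<Longrightarrow>
      (\<Sum>fi<D. T1 x y fi q a b * cnj (T1 x' y' fi q' a' b')) = kd b b' * R2 (q,a,x,y) (q',a',x',y')"
    and c2: "\<And>q a x q' a' x'. q<D \<Longrightarrow> a<d \<Longrightarrow> x<d \<Longrightarrow> q'<D \<Longrightarrow> a'<d \<Longrightarrow> x'<d \<Longrightarrow>
      (\<Sum>y<d. R2 (q,a,x,y) (q',a',x',y)) = kd a a' * R1 (q,x) (q',x')"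
    and c3: "\<And>q q'. q<D \<Longrightarrow> q'<D \<Longrightarrow> (\<Sum>x<d. R1 (q,x) (q',x)) = kd q q'"
    using comb unfolding combAB_fun_def by (elim exE conjE) (simp only: all_simps(1-6) imp_conjL)
  define R2' where "R2' = (\<lambda>(q::nat,a::nat,x::nat,y::nat) (q'::nat,a'::nat,x'::nat,y'::nat).
      \<Sum>q1<D. \<Sum>q1'<D. (cnj (J q q1) * cnj (cnj (J q' q1'))) * R2 (q1,a,x,y) (q1',a',x',y'))"
  define R1' where "R1' = (\<lambda>(q::nat,x::nat) (q'::nat,x'::nat).
      \<Sum>q1<D. \<Sum>q1'<D. (cnj (J q q1) * cnj (cnj (J q' q1'))) * R1 (q1,x) (q1',x'))"
  have C1: "(\<Sum>fi<D. T x y fi q a b * cnj (T x' y' fi q' a' b')) = kd b b' * R2' (q,a,x,y) (q',a',x',y')"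
    if b: "q<D" "a<d" "b<d" "x<d" "y<d" "q'<D" "a'<d" "b'<d" "x'<d" "y'<d" for q a b x y q' a' b' x' y'
  proof -
    have "(\<Sum>fi<D. T x y fi q a b * cnj (T x' y' fi q' a' b')) =
      (\<Sum>fi<D. (\<Sum>q1<D. (\<Sum>f1<D. K fi f1 * T1 x y f1 q1 a b) * cnj (J q q1)) *
               cnj (\<Sum>q1<D. (\<Sum>f1<D. K fi f1 * T1 x' y' f1 q1 a' b') * cnj (J q' q1)))"
      using b by (intro sum.cong refl) (simp add: rep)
    also have "\<dots> = (\<Sum>q1<D. \<Sum>q1'<D. (cnj (J q q1) * cnj (cnj (J q' q1'))) *
        (\<Sum>fi<D. (\<Sum>f1<D. K fi f1 * T1 x y f1 q1 a b) * cnj (\<Sum>f1<D. K fi f1 * T1 x' y' f1 q1' a' b')))"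
      by (rule bilin)
    also have "\<dots> = (\<Sum>q1<D. \<Sum>q1'<D. (cnj (J q q1) * cnj (cnj (J q' q1'))) *
        (\<Sum>f1<D. T1 x y f1 q1 a b * cnj (T1 x' y' f1 q1' a' b')))"
      by (intro sum.cong refl) (simp only: iso_inner[OF Kc])
    also have "\<dots> = (\<Sum>q1<D. \<Sum>q1'<D. (cnj (J q q1) * cnj (cnj (J q' q1'))) *
        (kd b b' * R2 (q1,a,x,y) (q1',a',x',y')))"
      using b by (intro sum.cong refl) (simp add: c1)
    also have "\<dots> = kd b b' * (\<Sum>q1<D. \<Sum>q1'<D. (cnj (J q q1) * cnj (cnj (J q' q1'))) * R2 (q1,a,x,y) (q1',a',x',y'))"
      by (rule pull_k)
    also have "\<dots> = kd b b' * R2' (q,a,x,y) (q',a',x',y')"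
      by (simp only: R2'_def prod.case)
    finally show ?thesis .
  qed
  have C2: "(\<Sum>y<d. R2' (q,a,x,y) (q',a',x',y)) = kd a a' * R1' (q,x) (q',x')"
    if b: "q<D" "a<d" "x<d" "q'<D" "a'<d" "x'<d" for q a x q' a' x'
  proof -
    have "(\<Sum>y<d. R2' (q,a,x,y) (q',a',x',y)) =
        (\<Sum>y<d. \<Sum>q1<D. \<Sum>q1'<D. (cnj (J q q1) * cnj (cnj (J q' q1'))) * R2 (q1,a,x,y) (q1',a',x',y))"
      by (simp add: R2'_def)
    also have "\<dots> = (\<Sum>q1<D. \<Sum>q1'<D. \<Sum>y<d. (cnj (J q q1) * cnj (cnj (J q' q1'))) * R2 (q1,a,x,y) (q1',a',x',y))"
      by (rule mv3)
    also have "\<dots> = (\<Sum>q1<D. \<Sum>q1'<D. (cnj (J q q1) * cnj (cnj (J q' q1'))) * (\<Sum>y<d. R2 (q1,a,x,y) (q1',a',x',y)))"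
      by (simp only: sum_distrib_left)
    also have "\<dots> = (\<Sum>q1<D. \<Sum>q1'<D. (cnj (J q q1) * cnj (cnj (J q' q1'))) * (kd a a' * R1 (q1,x) (q1',x')))"
      using b by (intro sum.cong refl) (simp add: c2)
    also have "\<dots> = kd a a' * (\<Sum>q1<D. \<Sum>q1'<D. (cnj (J q q1) * cnj (cnj (J q' q1'))) * R1 (q1,x) (q1',x'))"
      by (rule pull_k)
    also have "\<dots> = kd a a' * R1' (q,x) (q',x')"
      by (simp only: R1'_def prod.case)
    finally show ?thesis .
  qed
  have C3: "(\<Sum>x<d. R1' (q,x) (q',x)) = kd q q'" if b: "q<D" "q'<D" for q q'
  proof -
    have "(\<Sum>x<d. R1' (q,x) (q',x)) =
        (\<Sum>x<d. \<Sum>q1<D. \<Sum>q1'<D. (cnj (J q q1) * cnj (cnj (J q' q1'))) * R1 (q1,x) (q1',x))"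
      by (simp add: R1'_def)
    also have "\<dots> = (\<Sum>q1<D. \<Sum>q1'<D. \<Sum>x<d. (cnj (J q q1) * cnj (cnj (J q' q1'))) * R1 (q1,x) (q1',x))"
      by (rule mv3)
    also have "\<dots> = (\<Sum>q1<D. \<Sum>q1'<D. (cnj (J q q1) * cnj (cnj (J q' q1'))) * (\<Sum>x<d. R1 (q1,x) (q1',x)))"
      by (simp only: sum_distrib_left)
    also have "\<dots> = (\<Sum>q1<D. \<Sum>q1'<D. (cnj (J q q1) * cnj (cnj (J q' q1'))) * kd q1 q1')"
      by (intro sum.cong refl) (simp add: c3)
    also have "\<dots> = (\<Sum>q1<D. cnj (J q q1) * J q' q1)" by simp
    also have "\<dots> = cnj (\<Sum>q1<D. J q q1 * cnj (J q' q1))" by (simp add: cnj_sum)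
    also have "\<dots> = kd q q'" using Jr[OF b] by simp
    finally show ?thesis .
  qed
  show ?thesis unfolding combAB_fun_def
  proof (intro exI conjI)
    show "\<forall>q<D. \<forall>ao<d. \<forall>bo<d. \<forall>ai<d. \<forall>bi<d. \<forall>q'<D. \<forall>ao'<d. \<forall>bo'<d. \<forall>ai'<d. \<forall>bi'<d.
      (\<Sum>fi<D. T ai bi fi q ao bo * cnj (T ai' bi' fi q' ao' bo')) = kd bo bo' * R2' (q,ao,ai,bi) (q',ao',ai',bi')"
      by (intro allI impI, rule C1, assumption+)
    show "\<forall>q<D. \<forall>ao<d. \<forall>ai<d. \<forall>q'<D. \<forall>ao'<d. \<forall>ai'<d.
      (\<Sum>bi<d. R2' (q,ao,ai,bi) (q',ao',ai',bi)) = kd ao ao' * R1' (q,ai) (q',ai')"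
      by (intro allI impI, rule C2, assumption+)
    show "\<forall>q<D. \<forall>q'<D. (\<Sum>ai<d. R1' (q,ai) (q',ai)) = kd q q'" by (intro allI impI, rule C3, assumption+)
  qed
qed

lemma swp_orth:
  fixes T :: "nat \<Rightarrow> nat \<Rightarrow> nat \<Rightarrow> nat \<Rightarrow> nat \<Rightarrow> nat \<Rightarrow> complex"
  assumes roworth: "\<And>x y f x' y' f'. x<d \<Longrightarrow> y<d \<Longrightarrow> f<p \<Longrightarrow> x'<d \<Longrightarrow> y'<d \<Longrightarrow> f'<p \<Longrightarrow>
      (\<Sum>q<p. \<Sum>a<d. \<Sum>b<d. T x y f q a b * cnj (T x' y' f' q a b)) = kd x x' * kd y y' * kd f f'"
  and colorth: "\<And>q a b q' a' b'. q<p \<Longrightarrow> a<d \<Longrightarrow> b<d \<Longrightarrow> q'<p \<Longrightarrow> a'<d \<Longrightarrow> b'<d \<Longrightarrow>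
      (\<Sum>x<d. \<Sum>y<d. \<Sum>f<p. T x y f q a b * cnj (T x y f q' a' b')) = kd q q' * kd a a' * kd b b'"
  shows "\<And>x y f x' y' f'. x<d \<Longrightarrow> y<d \<Longrightarrow> f<p \<Longrightarrow> x'<d \<Longrightarrow> y'<d \<Longrightarrow> f'<p \<Longrightarrow>
      (\<Sum>q<p. \<Sum>a<d. \<Sum>b<d. swp T x y f q a b * cnj (swp T x' y' f' q a b)) = kd x x' * kd y y' * kd f f'"
  and "\<And>q a b q' a' b'. q<p \<Longrightarrow> a<d \<Longrightarrow> b<d \<Longrightarrow> q'<p \<Longrightarrow> a'<d \<Longrightarrow> b'<d \<Longrightarrow>
      (\<Sum>x<d. \<Sum>y<d. \<Sum>f<p. swp T x y f q a b * cnj (swp T x y f q' a' b')) = kd q q' * kd a a' * kd b b'"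
proof -
  show "(\<Sum>q<p. \<Sum>a<d. \<Sum>b<d. swp T x y f q a b * cnj (swp T x' y' f' q a b)) = kd x x' * kd y y' * kd f f'"
    if b: "x<d" "y<d" "f<p" "x'<d" "y'<d" "f'<p" for x y f x' y' f'
  proof -
    have "(\<Sum>q<p. \<Sum>a<d. \<Sum>b<d. swp T x y f q a b * cnj (swp T x' y' f' q a b)) =
        (\<Sum>q<p. \<Sum>a<d. \<Sum>b<d. T y x f q b a * cnj (T y' x' f' q b a))" by (simp add: swp_def)
    also have "\<dots> = (\<Sum>q<p. \<Sum>b<d. \<Sum>a<d. T y x f q b a * cnj (T y' x' f' q b a))"
      by (rule sum.cong[OF refl], rule sum.swap)
    also have "\<dots> = kd y y' * kd x x' * kd f f'" using roworth[of y x f y' x' f'] b by simp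
    finally show ?thesis by (simp add: mult_ac)
  qed
  show "(\<Sum>x<d. \<Sum>y<d. \<Sum>f<p. swp T x y f q a b * cnj (swp T x y f q' a' b')) = kd q q' * kd a a' * kd b b'"
    if b: "q<p" "a<d" "b<d" "q'<p" "a'<d" "b'<d" for q a b q' a' b'
  proof -
    have "(\<Sum>x<d. \<Sum>y<d. \<Sum>f<p. swp T x y f q a b * cnj (swp T x y f q' a' b')) =
        (\<Sum>x<d. \<Sum>y<d. \<Sum>f<p. T y x f q b a * cnj (T y x f q' b' a'))" by (simp add: swp_def)
    also have "\<dots> = (\<Sum>y<d. \<Sum>x<d. \<Sum>f<p. T y x f q b a * cnj (T y x f q' b' a'))"
      by (rule sum.swap)
    also have "\<dots> = kd q q' * kd b b' * kd a a'" using colorth[of q b a q' b' a'] b by simp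
    finally show ?thesis by (simp add: mult_ac)
  qed
qed

lemma iso_cols:
  assumes "isometry_mat D n K" "i<n" "i'<n"
  shows "(\<Sum>f<D. K$$(f,i) * cnj (K$$(f,i'))) = kd i i'"
proof -
  have K: "K \<in> carrier_mat D n" and o: "adj K * K = 1\<^sub>m n" using assms(1) by (auto simp: isometry_mat_def)
  have "(adj K * K) $$ (i',i) = (\<Sum>f<D. adj K $$ (i',f) * K$$(f,i))"
    using K assms by (intro mult_entry[where m=D]) auto
  also have "\<dots> = (\<Sum>f<D. K$$(f,i) * cnj (K$$(f,i')))" using K assms
    by (intro sum.cong refl) (simp add: mult.commute)
  finally have eq: "(adj K * K) $$ (i',i) = (\<Sum>f<D. K$$(f,i) * cnj (K$$(f,i')))" .
  have "(\<Sum>f<D. K$$(f,i) * cnj (K$$(f,i'))) = (1\<^sub>m n :: complex mat) $$ (i',i)" by (simp only: eq[symmetric] o)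
  also have "\<dots> = kd i' i" using assms by (simp add: one_mat_kd)
  finally show ?thesis by (simp add: kd_sym)
qed

lemma sum2: "(\<Sum>c<(2::nat). g c) = g 0 + g 1"
  by (simp add: numeral_2_eq_2)

lemma dim_eq: "U1 \<in> carrier_mat (d*d*f1) (p1*d*d) \<Longrightarrow> unitary_mat (p1*d*d) U1 \<Longrightarrow> 0 < d \<Longrightarrow> f1 = p1"
proof -
  assume a: "U1 \<in> carrier_mat (d*d*f1) (p1*d*d)" "unitary_mat (p1*d*d) U1" "0 < d"
  hence "d*d*f1 = p1*d*d" by (auto simp: unitary_mat_def)
  hence "(d*d)*f1 = (d*d)*p1" by (simp add: mult_ac)
  thus ?thesis using a(3) by simp
qed

theorem corollary5:
  fixes d D :: nat and U :: "complex mat"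
  assumes U_dim: "U \<in> carrier_mat (d*d*D) (D*d*d)"
    and U_unitary: "unitary_mat (D*d*d) U"
    and U_dsum: "direct_sum_pure_combs d D U"
  shows
   "(D = d \<longrightarrow>
      causally_ordered D d d d d D U \<and>
      ((\<exists>U0 U1 U2. unitary_mat d U0 \<and> unitary_mat d U1 \<and> unitary_mat d U2 \<and>
          (\<forall>ai<d. \<forall>bi<d. \<forall>fi<D. \<forall>p<D. \<forall>ao<d. \<forall>bo<d.
             opent d d D d d U ai bi fi p ao bo = U0 $$ (ai,p) * U1 $$ (bi,ao) * U2 $$ (fi,bo)))
       \<or>
       (\<exists>V0 V1 V2. unitary_mat d V0 \<and> unitary_mat d V1 \<and> unitary_mat d V2 \<and>
          (\<forall>ai<d. \<forall>bi<d. \<forall>fi<D. \<forall>p<D. \<forall>ao<d. \<forall>bo<d.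
             opent d d D d d U ai bi fi p ao bo = V0 $$ (bi,p) * V1 $$ (ai,bo) * V2 $$ (fi,ao)))))
    \<and>
    (D = 2*d \<longrightarrow>
      causally_ordered D d d d d D U \<or>
      (\<exists>WP WF U0 U1 U2 V0 V1 V2.
          unitary_mat D WP \<and> unitary_mat D WF \<and>
          unitary_mat d U0 \<and> unitary_mat d U1 \<and> unitary_mat d U2 \<and>
          unitary_mat d V0 \<and> unitary_mat d V1 \<and> unitary_mat d V2 \<and>
          (\<forall>ai<d. \<forall>bi<d. \<forall>fi<D. \<forall>p<D. \<forall>ao<d. \<forall>bo<d.
             opent d d D d d U ai bi fi p ao bo =
               (\<Sum>c<2. \<Sum>ft<d. \<Sum>pt<d.
                  cnj (WF $$ (tidx2 d c ft, fi)) *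
                  (if c = 0 then U0 $$ (ai,pt) * U1 $$ (bi,ao) * U2 $$ (ft,bo)
                   else V0 $$ (bi,pt) * V1 $$ (ai,bo) * V2 $$ (ft,ao)) *
                  WP $$ (tidx2 d c pt, p)))))"
proof (cases "d = 0")
  case True
  have co: "causally_ordered 0 0 0 0 0 0 U" by (simp add: causally_ordered_def comb_AB_def)
  have u0: "unitary_mat 0 (1\<^sub>m 0 :: complex mat)"
    unfolding unitary_mat_def by (auto intro!: eq_matI)
  have part1: "causally_ordered D d d d d D U \<and>
      ((\<exists>U0 U1 U2. unitary_mat d U0 \<and> unitary_mat d U1 \<and> unitary_mat d U2 \<and>
          (\<forall>ai<d. \<forall>bi<d. \<forall>fi<D. \<forall>p<D. \<forall>ao<d. \<forall>bo<d.
             opent d d D d d U ai bi fi p ao bo = U0 $$ (ai,p) * U1 $$ (bi,ao) * U2 $$ (fi,bo)))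
       \<or>
       (\<exists>V0 V1 V2. unitary_mat d V0 \<and> unitary_mat d V1 \<and> unitary_mat d V2 \<and>
          (\<forall>ai<d. \<forall>bi<d. \<forall>fi<D. \<forall>p<D. \<forall>ao<d. \<forall>bo<d.
             opent d d D d d U ai bi fi p ao bo = V0 $$ (bi,p) * V1 $$ (ai,bo) * V2 $$ (fi,ao))))" if "D = d"
  proof -
    have D0: "D = 0" using True that by simp
    have "(\<exists>U0 U1 U2. unitary_mat d U0 \<and> unitary_mat d U1 \<and> unitary_mat d U2)" using u0 True by blast
    thus ?thesis using co True D0 by auto
  qed
  have part2: "causally_ordered D d d d d D U \<or>
      (\<exists>WP WF U0 U1 U2 V0 V1 V2.
          unitary_mat D WP \<and> unitary_mat D WF \<and>
          unitary_mat d U0 \<and> unitary_mat d U1 \<and> unitary_mat d U2 \<and>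
          unitary_mat d V0 \<and> unitary_mat d V1 \<and> unitary_mat d V2 \<and>
          (\<forall>ai<d. \<forall>bi<d. \<forall>fi<D. \<forall>p<D. \<forall>ao<d. \<forall>bo<d.
             opent d d D d d U ai bi fi p ao bo =
               (\<Sum>c<2. \<Sum>ft<d. \<Sum>pt<d.
                  cnj (WF $$ (tidx2 d c ft, fi)) *
                  (if c = 0 then U0 $$ (ai,pt) * U1 $$ (bi,ao) * U2 $$ (ft,bo)
                   else V0 $$ (bi,pt) * V1 $$ (ai,bo) * V2 $$ (ft,ao)) *
                  WP $$ (tidx2 d c pt, p))))" if "D = 2*d"
  proof -
    have D0: "D = 0" using True that by simp
    show ?thesis using co True D0 by simp
  qed
  show ?thesis by (rule conjI; rule impI; (rule part1 part2; assumption))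
next
  case False
  hence d0: "0 < d" by simp
  obtain p1 p2 f1 f2 J1 J2 K1 K2 W1 W2 where
    pp: "p1 + p2 = D" and ff: "f1 + f2 = D" and iJ1: "isometry_mat D p1 J1" and iJ2: "isometry_mat D p2 J2"
    and oJ: "adj J1 * J2 = 0\<^sub>m p1 p2"
    and iK1: "isometry_mat D f1 K1" and iK2: "isometry_mat D f2 K2" and oK: "adj K1 * K2 = 0\<^sub>m f1 f2"
    and W1c: "W1 \<in> carrier_mat (d*d*f1) (p1*d*d)" and W1u: "unitary_mat (p1*d*d) W1"
    and W2c: "W2 \<in> carrier_mat (d*d*f2) (p2*d*d)" and W2u: "unitary_mat (p2*d*d) W2"
    and cW1: "comb_AB p1 d d d d f1 W1" and cW2: "comb_BA p2 d d d d f2 W2"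
    and eq1: "U * kron (kron J1 (1\<^sub>m d)) (1\<^sub>m d) = kron (kron (1\<^sub>m d) (1\<^sub>m d)) K1 * W1"
    and eq2: "U * kron (kron J2 (1\<^sub>m d)) (1\<^sub>m d) = kron (kron (1\<^sub>m d) (1\<^sub>m d)) K2 * W2"
    using U_dsum unfolding direct_sum_pure_combs_def by (elim exE conjE) (rule that)
  have f1p: "f1 = p1" using dim_eq[OF W1c W1u d0] .
  have f2p: "f2 = p2" using dim_eq[OF W2c W2u d0] .
  have J1c: "J1 \<in> carrier_mat D p1" and J2c: "J2 \<in> carrier_mat D p2"
    and oJ1: "adj J1 * J1 = 1\<^sub>m p1" and oJ2: "adj J2 * J2 = 1\<^sub>m p2"
    using iJ1 iJ2 by (auto simp: isometry_mat_def)
  have K1c: "K1 \<in> carrier_mat D p1" and K2c: "K2 \<in> carrier_mat D p2"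
    and oK1: "adj K1 * K1 = 1\<^sub>m p1" and oK2: "adj K2 * K2 = 1\<^sub>m p2" and oK': "adj K1 * K2 = 0\<^sub>m p1 p2"
    using iK1 iK2 oK f1p f2p by (auto simp: isometry_mat_def)
  have iK1': "isometry_mat D p1 K1" and iK2': "isometry_mat D p2 K2" using iK1 iK2 f1p f2p by auto
  have W1c': "W1 \<in> carrier_mat (d*d*p1) (p1*d*d)" and W2c': "W2 \<in> carrier_mat (d*d*p2) (p2*d*d)"
    using W1c W2c f1p f2p by auto
  define T where "T = opent d d D d d U"
  define T1 where "T1 = opent d d p1 d d W1"
  define T2 where "T2 = opent d d p2 d d W2"
  note oT = unitary_orth[OF U_dim U_unitary, folded T_def]
  note oT1 = unitary_orth[OF W1c' W1u, folded T1_def]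
  note oT2 = unitary_orth[OF W2c' W2u, folded T2_def]
  note oT2s = swp_orth[OF oT2(1) oT2(2)]
  have comb1: "combAB_fun p1 d p1 T1" using cW1 f1p by (simp add: comb_AB_fun T1_def)
  have comb2: "combAB_fun p2 d p2 (swp T2)" using cW2 f2p by (simp add: comb_BA_fun T2_def)
  have E1: "(\<Sum>q<D. T x y f q a b * J1$$(q,q1)) = (\<Sum>f1'<p1. K1$$(f,f1') * T1 x y f1' q1 a b)"
    if "x<d" "y<d" "f<D" "q1<p1" "a<d" "b<d" for x y f q1 a b
    using dsum_entry[OF U_dim J1c K1c W1c' eq1 that] by (simp add: T_def T1_def)
  have E2: "(\<Sum>q<D. T x y f q a b * J2$$(q,q1)) = (\<Sum>f1'<p2. K2$$(f,f1') * T2 x y f1' q1 a b)"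
    if "x<d" "y<d" "f<D" "q1<p2" "a<d" "b<d" for x y f q1 a b
    using dsum_entry[OF U_dim J2c K2c W2c' eq2 that] by (simp add: T_def T2_def)
  note Jcomp = block_complete[OF J1c J2c pp oJ1 oJ2 oJ]
  note Kcomp = block_complete[OF K1c K2c pp oK1 oK2 oK']
  have Rep: "T x y f q a b = (\<Sum>q1<p1. (\<Sum>f1'<p1. K1$$(f,f1') * T1 x y f1' q1 a b) * cnj (J1$$(q,q1)))
      + (\<Sum>q2<p2. (\<Sum>f2'<p2. K2$$(f,f2') * T2 x y f2' q2 a b) * cnj (J2$$(q,q2)))"
    if b: "x<d" "y<d" "f<D" "q<D" "a<d" "b<d" for x y f q a b
  proof (rule rep_formula)
    show "(\<Sum>q<D. T x y f q a b * J1$$(q,q1)) = (\<Sum>f1'<p1. K1$$(f,f1') * T1 x y f1' q1 a b)" if "q1<p1" for q1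
      using E1 b that by simp
    show "(\<Sum>q<D. T x y f q a b * J2$$(q,q1)) = (\<Sum>f1'<p2. K2$$(f,f1') * T2 x y f1' q1 a b)" if "q1<p2" for q1
      using E2 b that by simp
    show "(\<Sum>k<p1. J1$$(q,k) * cnj (J1$$(q',k))) + (\<Sum>k<p2. J2$$(q,k) * cnj (J2$$(q',k))) = kd q q'"
      if "q<D" "q'<D" for q q' using Jcomp(1) that by simp
    show "q < D" using b by simp
  qed
  have caseAB: "combAB_fun D d D T" if p2z: "p2 = 0"
  proof -
    have p1D: "p1 = D" using pp p2z by simp
    have comb1': "combAB_fun D d D T1" using comb1 p1D by simp
    have Kc1: "(\<Sum>f<D. K1$$(f,i) * cnj (K1$$(f,i'))) = kd i i'" if "i<D" "i'<D" for i i'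
      using iso_cols[OF iK1'] that p1D by simp
    have Jr1: "(\<Sum>k<D. J1$$(q,k) * cnj (J1$$(q',k))) = kd q q'" if "q<D" "q'<D" for q q'
      using Jcomp(1)[OF that] p1D p2z by simp
    have Rep1: "T x y f q a b = (\<Sum>q1<D. (\<Sum>f1<D. K1$$(f,f1) * T1 x y f1 q1 a b) * cnj (J1$$(q,q1)))"
      if "x<d" "y<d" "f<D" "q<D" "a<d" "b<d" for x y f q a b
      using Rep[OF that] p1D p2z by simp
    show ?thesis by (rule comb_conj, (rule comb1' Kc1 Jr1 Rep1; assumption)+)
  qed
  have caseBA: "combAB_fun D d D (swp T)" if p1z: "p1 = 0"
  proof -
    have p2D: "p2 = D" using pp p1z by simp
    have comb2': "combAB_fun D d D (swp T2)" using comb2 p2D by simp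
    have Kc2: "(\<Sum>f<D. K2$$(f,i) * cnj (K2$$(f,i'))) = kd i i'" if "i<D" "i'<D" for i i'
      using iso_cols[OF iK2'] that p2D by simp
    have Jr2: "(\<Sum>k<D. J2$$(q,k) * cnj (J2$$(q',k))) = kd q q'" if "q<D" "q'<D" for q q'
      using Jcomp(1)[OF that] p2D p1z by simp
    have Rep2: "swp T x y f q a b = (\<Sum>q1<D. (\<Sum>f1<D. K2$$(f,f1) * swp T2 x y f1 q1 a b) * cnj (J2$$(q,q1)))"
      if "x<d" "y<d" "f<D" "q<D" "a<d" "b<d" for x y f q a b
      using Rep[of y x f q b a] that p2D p1z by (simp add: swp_def)
    show ?thesis by (rule comb_conj, (rule comb2' Kc2 Jr2 Rep2; assumption)+)
  qed
  have bothpos: "p1 = d \<and> p2 = d \<and>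
      (\<exists>A0 A1 A2. unitary_mat d A0 \<and> unitary_mat d A1 \<and> unitary_mat d A2 \<and>
        (\<forall>x<d. \<forall>y<d. \<forall>f<d. \<forall>q<d. \<forall>a<d. \<forall>b<d. T1 x y f q a b = A0 $$ (x,q) * A1 $$ (y,a) * A2 $$ (f,b))) \<and>
      (\<exists>B0 B1 B2. unitary_mat d B0 \<and> unitary_mat d B1 \<and> unitary_mat d B2 \<and>
        (\<forall>x<d. \<forall>y<d. \<forall>f<d. \<forall>q<d. \<forall>a<d. \<forall>b<d. swp T2 x y f q a b = B0 $$ (x,q) * B1 $$ (y,a) * B2 $$ (f,b)))"
    if "0 < p1" "0 < p2" "D \<le> 2*d"
  proof -
    have a1: "p1 < 2*d" "p2 < 2*d" using that pp by auto
    have F1: "p1 = d \<and> (\<exists>A0 A1 A2. unitary_mat d A0 \<and> unitary_mat d A1 \<and> unitary_mat d A2 \<and>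
        (\<forall>x<d. \<forall>y<d. \<forall>f<d. \<forall>q<d. \<forall>a<d. \<forall>b<d. T1 x y f q a b = A0 $$ (x,q) * A1 $$ (y,a) * A2 $$ (f,b)))"
      by (rule comb_factor, (rule oT1 comb1 that(1) a1(1); assumption)+)
    have F2: "p2 = d \<and> (\<exists>B0 B1 B2. unitary_mat d B0 \<and> unitary_mat d B1 \<and> unitary_mat d B2 \<and>
        (\<forall>x<d. \<forall>y<d. \<forall>f<d. \<forall>q<d. \<forall>a<d. \<forall>b<d. swp T2 x y f q a b = B0 $$ (x,q) * B1 $$ (y,a) * B2 $$ (f,b)))"
      by (rule comb_factor, (rule oT2s comb2 that(2) a1(2); assumption)+)
    show ?thesis using F1 F2 by blast
  qed
  have part1: "causally_ordered D d d d d D U \<and>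
      ((\<exists>U0 U1 U2. unitary_mat d U0 \<and> unitary_mat d U1 \<and> unitary_mat d U2 \<and>
          (\<forall>ai<d. \<forall>bi<d. \<forall>fi<D. \<forall>p<D. \<forall>ao<d. \<forall>bo<d.
             opent d d D d d U ai bi fi p ao bo = U0 $$ (ai,p) * U1 $$ (bi,ao) * U2 $$ (fi,bo)))
       \<or>
       (\<exists>V0 V1 V2. unitary_mat d V0 \<and> unitary_mat d V1 \<and> unitary_mat d V2 \<and>
          (\<forall>ai<d. \<forall>bi<d. \<forall>fi<D. \<forall>p<D. \<forall>ao<d. \<forall>bo<d.
             opent d d D d d U ai bi fi p ao bo = V0 $$ (bi,p) * V1 $$ (ai,bo) * V2 $$ (fi,ao))))" if Dd: "D = d"
    proof (cases "p2 = 0")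
      case True
      have cT: "combAB_fun D d D T" using caseAB[OF True] .
      have F: "D = d \<and> (\<exists>U0 U1 U2. unitary_mat d U0 \<and> unitary_mat d U1 \<and> unitary_mat d U2 \<and>
        (\<forall>x<d. \<forall>y<d. \<forall>f<d. \<forall>q<d. \<forall>a<d. \<forall>b<d. T x y f q a b = U0 $$ (x,q) * U1 $$ (y,a) * U2 $$ (f,b)))"
        using Dd d0 by - (rule comb_factor, (rule oT cT; assumption)+, simp_all)
      show ?thesis using cT F Dd by (auto simp: causally_ordered_def comb_AB_fun T_def)
    next
      case False
      show ?thesis
      proof (cases "p1 = 0")
        case True
        have cT: "combAB_fun D d D (swp T)" using caseBA[OF True] .
        note oTs = swp_orth[OF oT(1) oT(2)]
        have F: "D = d \<and> (\<exists>U0 U1 U2. unitary_mat d U0 \<and> unitary_mat d U1 \<and> unitary_mat d U2 \<and>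
          (\<forall>x<d. \<forall>y<d. \<forall>f<d. \<forall>q<d. \<forall>a<d. \<forall>b<d. swp T x y f q a b = U0 $$ (x,q) * U1 $$ (y,a) * U2 $$ (f,b)))"
          using Dd d0 by - (rule comb_factor, (rule oTs cT; assumption)+, simp_all)
        then obtain V0 V1 V2 where V: "unitary_mat d V0" "unitary_mat d V1" "unitary_mat d V2"
          and VT: "\<forall>x<d. \<forall>y<d. \<forall>f<d. \<forall>q<d. \<forall>a<d. \<forall>b<d. swp T x y f q a b = V0 $$ (x,q) * V1 $$ (y,a) * V2 $$ (f,b)"
          by blast
        have VTU: "\<forall>ai<d. \<forall>bi<d. \<forall>fi<D. \<forall>p<D. \<forall>ao<d. \<forall>bo<d.
             opent d d D d d U ai bi fi p ao bo = V0 $$ (bi,p) * V1 $$ (ai,bo) * V2 $$ (fi,ao)"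
          using VT Dd by (auto simp: swp_def T_def)
        have "comb_BA D d d d d D U" using cT by (simp add: comb_BA_fun T_def)
        hence co: "causally_ordered D d d d d D U" by (simp add: causally_ordered_def)
        show ?thesis
          apply (rule conjI, rule co, rule disjI2)
          apply (rule exI[of _ V0], rule exI[of _ V1], rule exI[of _ V2])
          using V VTU by simp
      next
        case False2: False
        have "p1 = d \<and> p2 = d" using bothpos False False2 Dd by auto
        hence False using pp Dd d0 by simp
        thus ?thesis ..
      qed
    qed
  have part2: "causally_ordered D d d d d D U \<or>
      (\<exists>WP WF U0 U1 U2 V0 V1 V2.
          unitary_mat D WP \<and> unitary_mat D WF \<and>
          unitary_mat d U0 \<and> unitary_mat d U1 \<and> unitary_mat d U2 \<and>
          unitary_mat d V0 \<and> unitary_mat d V1 \<and> unitary_mat d V2 \<and>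
          (\<forall>ai<d. \<forall>bi<d. \<forall>fi<D. \<forall>p<D. \<forall>ao<d. \<forall>bo<d.
             opent d d D d d U ai bi fi p ao bo =
               (\<Sum>c<2. \<Sum>ft<d. \<Sum>pt<d.
                  cnj (WF $$ (tidx2 d c ft, fi)) *
                  (if c = 0 then U0 $$ (ai,pt) * U1 $$ (bi,ao) * U2 $$ (ft,bo)
                   else V0 $$ (bi,pt) * V1 $$ (ai,bo) * V2 $$ (ft,ao)) *
                  WP $$ (tidx2 d c pt, p))))" if D2: "D = 2*d"
    proof (cases "p2 = 0")
      case True
      thus ?thesis using caseAB[OF True] by (simp add: causally_ordered_def comb_AB_fun T_def)
    next
      case False
      show ?thesis
      proof (cases "p1 = 0")
        case True
        thus ?thesis using caseBA[OF True] by (simp add: causally_ordered_def comb_BA_fun T_def)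
      next
        case False2: False
        from bothpos[OF _ _] False False2 D2 have BP: "p1 = d \<and> p2 = d \<and>
          (\<exists>A0 A1 A2. unitary_mat d A0 \<and> unitary_mat d A1 \<and> unitary_mat d A2 \<and>
            (\<forall>x<d. \<forall>y<d. \<forall>f<d. \<forall>q<d. \<forall>a<d. \<forall>b<d. T1 x y f q a b = A0 $$ (x,q) * A1 $$ (y,a) * A2 $$ (f,b))) \<and>
          (\<exists>B0 B1 B2. unitary_mat d B0 \<and> unitary_mat d B1 \<and> unitary_mat d B2 \<and>
            (\<forall>x<d. \<forall>y<d. \<forall>f<d. \<forall>q<d. \<forall>a<d. \<forall>b<d. swp T2 x y f q a b = B0 $$ (x,q) * B1 $$ (y,a) * B2 $$ (f,b)))"
          by simp
        then obtain A0 A1 A2 B0 B1 B2 where p1d: "p1 = d" and p2d: "p2 = d"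
          and uA: "unitary_mat d A0" "unitary_mat d A1" "unitary_mat d A2"
          and TA: "\<forall>x<d. \<forall>y<d. \<forall>f<d. \<forall>q<d. \<forall>a<d. \<forall>b<d. T1 x y f q a b = A0 $$ (x,q) * A1 $$ (y,a) * A2 $$ (f,b)"
          and uB: "unitary_mat d B0" "unitary_mat d B1" "unitary_mat d B2"
          and TB: "\<forall>x<d. \<forall>y<d. \<forall>f<d. \<forall>q<d. \<forall>a<d. \<forall>b<d. swp T2 x y f q a b = B0 $$ (x,q) * B1 $$ (y,a) * B2 $$ (f,b)"
          by (elim exE conjE)
        define WP where "WP = mat D D (\<lambda>(i,j). if i<p1 then cnj (J1$$(j,i)) else cnj (J2$$(j,i-p1)))"
        define WF where "WF = mat D D (\<lambda>(i,j). if i<p1 then cnj (K1$$(j,i)) else cnj (K2$$(j,i-p1)))"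
        have uWP: "unitary_mat D WP" using Jcomp(2) by (simp add: WP_def)
        have uWF: "unitary_mat D WF" using Kcomp(2) by (simp add: WF_def)
        have formula: "opent d d D d d U ai bi fi p ao bo =
               (\<Sum>c<2. \<Sum>ft<d. \<Sum>pt<d.
                  cnj (WF $$ (tidx2 d c ft, fi)) *
                  (if c = 0 then A0 $$ (ai,pt) * A1 $$ (bi,ao) * A2 $$ (ft,bo)
                   else B0 $$ (bi,pt) * B1 $$ (ai,bo) * B2 $$ (ft,ao)) *
                  WP $$ (tidx2 d c pt, p))"
          if b: "ai<d" "bi<d" "fi<D" "p<D" "ao<d" "bo<d" for ai bi fi p ao bo
        proof -
          have c0: "(\<Sum>q1<p1. (\<Sum>f1'<p1. K1$$(fi,f1') * T1 ai bi f1' q1 ao bo) * cnj (J1$$(p,q1))) =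
              (\<Sum>ft<d. \<Sum>pt<d. cnj (WF $$ (tidx2 d 0 ft, fi)) *
                  (A0 $$ (ai,pt) * A1 $$ (bi,ao) * A2 $$ (ft,bo)) * WP $$ (tidx2 d 0 pt, p))"
          proof -
            have "(\<Sum>q1<p1. (\<Sum>f1'<p1. K1$$(fi,f1') * T1 ai bi f1' q1 ao bo) * cnj (J1$$(p,q1))) =
                (\<Sum>q1<d. \<Sum>f1'<d. K1$$(fi,f1') * T1 ai bi f1' q1 ao bo * cnj (J1$$(p,q1)))"
              using p1d by (simp add: sum_distrib_right)
            also have "\<dots> = (\<Sum>f1'<d. \<Sum>q1<d. K1$$(fi,f1') * T1 ai bi f1' q1 ao bo * cnj (J1$$(p,q1)))"
              by (rule sum.swap)
            also have "\<dots> = (\<Sum>ft<d. \<Sum>pt<d. cnj (WF $$ (tidx2 d 0 ft, fi)) *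
                  (A0 $$ (ai,pt) * A1 $$ (bi,ao) * A2 $$ (ft,bo)) * WP $$ (tidx2 d 0 pt, p))"
              using b TA p1d pp D2 by (intro sum.cong refl) (simp add: WF_def WP_def tidx2_def)
            finally show ?thesis .
          qed
          have c1: "(\<Sum>q2<p2. (\<Sum>f2'<p2. K2$$(fi,f2') * T2 ai bi f2' q2 ao bo) * cnj (J2$$(p,q2))) =
              (\<Sum>ft<d. \<Sum>pt<d. cnj (WF $$ (tidx2 d 1 ft, fi)) *
                  (B0 $$ (bi,pt) * B1 $$ (ai,bo) * B2 $$ (ft,ao)) * WP $$ (tidx2 d 1 pt, p))"
          proof -
            have TB': "T2 ai bi f q ao bo = B0 $$ (bi,q) * B1 $$ (ai,bo) * B2 $$ (f,ao)" if "f<d" "q<d" for f q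
              using TB b that unfolding swp_def by auto
            have "(\<Sum>q2<p2. (\<Sum>f2'<p2. K2$$(fi,f2') * T2 ai bi f2' q2 ao bo) * cnj (J2$$(p,q2))) =
                (\<Sum>q1<d. \<Sum>f1'<d. K2$$(fi,f1') * T2 ai bi f1' q1 ao bo * cnj (J2$$(p,q1)))"
              using p2d by (simp add: sum_distrib_right)
            also have "\<dots> = (\<Sum>f1'<d. \<Sum>q1<d. K2$$(fi,f1') * T2 ai bi f1' q1 ao bo * cnj (J2$$(p,q1)))"
              by (rule sum.swap)
            also have "\<dots> = (\<Sum>ft<d. \<Sum>pt<d. cnj (WF $$ (tidx2 d 1 ft, fi)) *
                  (B0 $$ (bi,pt) * B1 $$ (ai,bo) * B2 $$ (ft,ao)) * WP $$ (tidx2 d 1 pt, p))"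
              using b TB' p1d pp D2 by (intro sum.cong refl) (simp add: WF_def WP_def tidx2_def)
            finally show ?thesis .
          qed
          have "opent d d D d d U ai bi fi p ao bo = T ai bi fi p ao bo" by (simp add: T_def)
          also have "\<dots> = (\<Sum>q1<p1. (\<Sum>f1'<p1. K1$$(fi,f1') * T1 ai bi f1' q1 ao bo) * cnj (J1$$(p,q1)))
              + (\<Sum>q2<p2. (\<Sum>f2'<p2. K2$$(fi,f2') * T2 ai bi f2' q2 ao bo) * cnj (J2$$(p,q2)))"
            using Rep[OF b(1,2,3,4,5,6)] .
          also have "\<dots> = (\<Sum>c<2. \<Sum>ft<d. \<Sum>pt<d.
                  cnj (WF $$ (tidx2 d c ft, fi)) *
                  (if c = 0 then A0 $$ (ai,pt) * A1 $$ (bi,ao) * A2 $$ (ft,bo)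
                   else B0 $$ (bi,pt) * B1 $$ (ai,bo) * B2 $$ (ft,ao)) *
                  WP $$ (tidx2 d c pt, p))"
            unfolding sum2 c0 c1 by simp
          finally show ?thesis .
        qed
        show ?thesis
          apply (rule disjI2)
          apply (rule exI[of _ WP], rule exI[of _ WF], rule exI[of _ A0], rule exI[of _ A1], rule exI[of _ A2])
          apply (rule exI[of _ B0], rule exI[of _ B1], rule exI[of _ B2])
          using uWP uWF uA uB formula by blast
      qed
    qed
  show ?thesis by (rule conjI; rule impI; (rule part1 part2; assumption))
qed

end
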